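(* Suppose that $S$ is a finite regular semigroup of minimum cardinality with the property that $S$ possesses a permutation matching but no involution matching. Then $S$ is a $0$-rectangular band.
   Context: For an element $a$ of a semigroup $S$, $V(a)=\{b\in S: aba=a,\ bab=b\}$ is the set of inverses of $a$. A permutation matching of a finite regular semigroup $S$ is a bijection $\phi:S\to S$ with $\phi(a)\in V(a)$ for all $a\in S$. An involution matching is a permutation matching $\phi$ with $\phi\circ\phi=\mathrm{id}_S$. A $0$-rectangular band is a completely $0$-simple semigroup all of whose $\mathscr{H}$-classes are trivial (equivalently, a Rees matrix semigroup $\mathcal{M}^0[\{1\};I,\Lambda;P]$ over the trivial group with a regular sandwich matrix $P$). *)

theory Defs
  imports Main
begin

definition semigroup_on :: "'a set \<Rightarrow> ('a \<Rightarrow> 'a \<Rightarrow> 'a) \<Rightarrow> bool" where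
  "semigroup_on S m \<longleftrightarrow> (\<forall>x\<in>S. \<forall>y\<in>S. m x y \<in> S) \<and>
     (\<forall>x\<in>S. \<forall>y\<in>S. \<forall>z\<in>S. m (m x y) z = m x (m y z))"

definition inverses :: "'a set \<Rightarrow> ('a \<Rightarrow> 'a \<Rightarrow> 'a) \<Rightarrow> 'a \<Rightarrow> 'a set" where
  "inverses S m a = {b \<in> S. m (m a b) a = a \<and> m (m b a) b = b}"

definition regular_sg :: "'a set \<Rightarrow> ('a \<Rightarrow> 'a \<Rightarrow> 'a) \<Rightarrow> bool" where
  "regular_sg S m \<longleftrightarrow> (\<forall>a\<in>S. inverses S m a \<noteq> {})"

definition permutation_matching :: "'a set \<Rightarrow> ('a \<Rightarrow> 'a \<Rightarrow> 'a) \<Rightarrow> ('a \<Rightarrow> 'a) \<Rightarrow> bool" where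
  "permutation_matching S m \<phi> \<longleftrightarrow> bij_betw \<phi> S S \<and> (\<forall>a\<in>S. \<phi> a \<in> inverses S m a)"

definition involution_matching :: "'a set \<Rightarrow> ('a \<Rightarrow> 'a \<Rightarrow> 'a) \<Rightarrow> ('a \<Rightarrow> 'a) \<Rightarrow> bool" where
  "involution_matching S m \<phi> \<longleftrightarrow> permutation_matching S m \<phi> \<and> (\<forall>a\<in>S. \<phi> (\<phi> a) = a)"

definition perm_not_inv :: "'a set \<Rightarrow> ('a \<Rightarrow> 'a \<Rightarrow> 'a) \<Rightarrow> bool" where
  "perm_not_inv S m \<longleftrightarrow> (\<exists>\<phi>. permutation_matching S m \<phi>) \<and> \<not> (\<exists>\<phi>. involution_matching S m \<phi>)"

text \<open>0-rectangular band: S is isomorphic to a Rees matrix semigroup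
M^0[{1}; I, Lambda; P] over the trivial group, with I, Lambda nonempty and P regular
(every row and every column of P has a nonzero entry).  Elements are encoded as
None (the zero) and Some (i, lambda); the product is
(i,lambda)(j,mu) = (i,mu) if P lambda j is nonzero, and 0 otherwise.\<close>
definition rees_mult :: "('l \<Rightarrow> 'i \<Rightarrow> bool) \<Rightarrow> ('i \<times> 'l) option \<Rightarrow> ('i \<times> 'l) option \<Rightarrow> ('i \<times> 'l) option" where
  "rees_mult P x y = (case (x, y) of
      (Some (i, l), Some (j, u)) \<Rightarrow> (if P l j then Some (i, u) else None)
    | _ \<Rightarrow> None)"

definition zero_rectangular_band :: "'a set \<Rightarrow> ('a \<Rightarrow> 'a \<Rightarrow> 'a) \<Rightarrow> bool" where
  "zero_rectangular_band S m \<longleftrightarrow>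
     (\<exists>(I::'a set) (L::'a set) (P::'a \<Rightarrow> 'a \<Rightarrow> bool) (f::'a \<Rightarrow> ('a \<times> 'a) option).
        I \<noteq> {} \<and> L \<noteq> {} \<and>
        (\<forall>l\<in>L. \<exists>i\<in>I. P l i) \<and> (\<forall>i\<in>I. \<exists>l\<in>L. P l i) \<and>
        bij_betw f S (insert None (Some ` (I \<times> L))) \<and>
        (\<forall>x\<in>S. \<forall>y\<in>S. f (m x y) = rees_mult P (f x) (f y)))"

end

theory Submission
  imports Defs
begin

theorem hall_marriage:
  fixes A :: "'i \<Rightarrow> 'b set"
  assumes "finite X" and "\<forall>x\<in>X. finite (A x)" and "\<forall>K\<subseteq>X. card K \<le> card (\<Union>(A ` K))"
  shows "\<exists>g. inj_on g X \<and> (\<forall>x\<in>X. g x \<in> A x)"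
  using assms
proof (induction "card X" arbitrary: X A rule: less_induct)
  case less
  note finX = less.prems(1) and finA = less.prems(2) and hallc = less.prems(3)
  have finU: "finite (\<Union>(A ` K))" if "K \<subseteq> X" for K
    using that finA finX finite_subset by (meson finite_UN_I subsetD)
  show ?case
  proof (cases "X = {}")
    case True then show ?thesis by simp
  next
    case nonempty: False
    show ?thesis
    proof (cases "\<exists>K. K \<noteq> {} \<and> K \<subset> X \<and> card (\<Union>(A ` K)) = card K")
      case True
      then obtain K where K: "K \<noteq> {}" "K \<subset> X" "card (\<Union>(A ` K)) = card K" by blast
      have finK: "finite K" using K(2) finX finite_subset by blast
      have "card K < card X" using K(2) finX psubset_card_mono by blast
      moreover have "\<forall>x\<in>K. finite (A x)" using finA K(2) by blast
      moreover have "\<forall>L\<subseteq>K. card L \<le> card (\<Union>(A ` L))" using hallc K(2) by blast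
      ultimately obtain g1 where g1: "inj_on g1 K" "\<forall>x\<in>K. g1 x \<in> A x"
        using less.hyps[of K A] finK by blast
      define UK where "UK = \<Union>(A ` K)"
      define A' where "A' x = A x - UK" for x
      have finUK: "finite UK" unfolding UK_def using finU K(2) by blast
      have "card (X - K) < card X" using K finX
        by (metis Diff_subset card_Diff_subset card_gt_0_iff diff_less finite_subset less_le subset_empty)
      moreover have "finite (X - K)" using finX by blast
      moreover have "\<forall>x\<in>X - K. finite (A' x)" using finA unfolding A'_def by blast
      moreover have "\<forall>L\<subseteq>X - K. card L \<le> card (\<Union>(A' ` L))"
      proof (intro allI impI)
        fix L assume L: "L \<subseteq> X - K"
        have finL: "finite L" using L finX finite_subset by blast
        have eq: "\<Union>(A' ` L) = \<Union>(A ` (L \<union> K)) - UK" unfolding A'_def UK_def by blast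
        have sub: "UK \<subseteq> \<Union>(A ` (L \<union> K))" unfolding UK_def by blast
        have LK: "L \<union> K \<subseteq> X" using L K(2) by blast
        have "card (\<Union>(A' ` L)) = card (\<Union>(A ` (L \<union> K))) - card UK"
          unfolding eq using card_Diff_subset[OF finUK sub] .
        moreover have "card (L \<union> K) \<le> card (\<Union>(A ` (L \<union> K)))" using hallc LK by blast
        moreover have "card (L \<union> K) = card L + card K"
          using card_Un_disjoint[OF finL finK] L by blast
        moreover have "card UK = card K" using K(3) UK_def by simp
        ultimately show "card L \<le> card (\<Union>(A' ` L))" by linarith
      qed
      ultimately obtain g2 where g2: "inj_on g2 (X - K)" "\<forall>x\<in>X - K. g2 x \<in> A' x"
        using less.hyps[of "X - K" A'] by blast
      define g where "g x = (if x \<in> K then g1 x else g2 x)" for x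
      have "inj_on g X"
      proof (rule inj_onI)
        fix x y assume xy: "x \<in> X" "y \<in> X" "g x = g y"
        show "x = y"
        proof (cases "x \<in> K"; cases "y \<in> K")
          assume "x \<in> K" "y \<in> K" then show ?thesis using xy g1 unfolding g_def inj_on_def by auto
        next
          assume "x \<in> K" "y \<notin> K"
          then have "g x \<in> UK" using g1 unfolding g_def UK_def by auto
          moreover have "g y \<notin> UK" using g2 xy(2) \<open>y \<notin> K\<close> unfolding g_def A'_def by auto
          ultimately show ?thesis using xy by auto
        next
          assume "x \<notin> K" "y \<in> K"
          then have "g y \<in> UK" using g1 unfolding g_def UK_def by auto
          moreover have "g x \<notin> UK" using g2 xy(1) \<open>x \<notin> K\<close> unfolding g_def A'_def by auto
          ultimately show ?thesis using xy by auto
        next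
          assume "x \<notin> K" "y \<notin> K" then show ?thesis using xy g2 unfolding g_def inj_on_def by auto
        qed
      qed
      moreover have "\<forall>x\<in>X. g x \<in> A x" using g1 g2 unfolding g_def A'_def by auto
      ultimately show ?thesis by blast
    next
      case False
      then have strict: "card K < card (\<Union>(A ` K))" if "K \<noteq> {}" "K \<subset> X" for K
        using that hallc by (metis le_neq_implies_less psubset_imp_subset)
      obtain x0 where x0: "x0 \<in> X" using nonempty by blast
      have "card {x0} \<le> card (\<Union>(A ` {x0}))" using hallc x0 by blast
      then have "card {x0} \<le> card (A x0)" by simp
      then have "A x0 \<noteq> {}" by auto
      then obtain y0 where y0: "y0 \<in> A x0" by blast
      define A' where "A' x = A x - {y0}" for x
      have "card (X - {x0}) < card X" using finX x0 by (meson card_Diff1_less)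
      moreover have "finite (X - {x0})" using finX by blast
      moreover have "\<forall>x\<in>X - {x0}. finite (A' x)" using finA unfolding A'_def by blast
      moreover have "\<forall>L\<subseteq>X - {x0}. card L \<le> card (\<Union>(A' ` L))"
      proof (intro allI impI)
        fix L assume L: "L \<subseteq> X - {x0}"
        show "card L \<le> card (\<Union>(A' ` L))"
        proof (cases "L = {}")
          case True then show ?thesis by simp
        next
          case False
          have LX: "L \<subset> X" using L x0 by blast
          have lt: "card L < card (\<Union>(A ` L))" using strict[OF False LX] .
          have eq: "\<Union>(A' ` L) = \<Union>(A ` L) - {y0}" unfolding A'_def by blast
          have "card (\<Union>(A ` L)) - 1 \<le> card (\<Union>(A' ` L))"
            unfolding eq by (metis card_Diff_singleton_if diff_le_self order_refl)
          then show ?thesis using lt by linarith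
        qed
      qed
      ultimately obtain g2 where g2: "inj_on g2 (X - {x0})" "\<forall>x\<in>X - {x0}. g2 x \<in> A' x"
        using less.hyps[of "X - {x0}" A'] by blast
      define g where "g x = (if x = x0 then y0 else g2 x)" for x
      have "inj_on g X"
      proof (rule inj_onI)
        fix x y assume xy: "x \<in> X" "y \<in> X" "g x = g y"
        show "x = y"
        proof (cases "x = x0"; cases "y = x0")
          assume "x \<noteq> x0" "y \<noteq> x0" then show ?thesis using xy g2 unfolding g_def inj_on_def by auto
        qed (use xy g2 in \<open>auto simp: g_def A'_def\<close>)
      qed
      moreover have "\<forall>x\<in>X. g x \<in> A x" using g2 y0 unfolding g_def A'_def by auto
      ultimately show ?thesis by blast
    qed
  qed
qed

lemma sg_cl: "semigroup_on T n \<Longrightarrow> a \<in> T \<Longrightarrow> b \<in> T \<Longrightarrow> n a b \<in> T"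
  unfolding semigroup_on_def by blast
lemma sg_as: "semigroup_on T n \<Longrightarrow> a \<in> T \<Longrightarrow> b \<in> T \<Longrightarrow> c \<in> T \<Longrightarrow> n (n a b) c = n a (n b c)"
  unfolding semigroup_on_def by blast

lemma iso_sg:
  assumes bij: "bij_betw h T T'" and hom: "\<And>a b. a \<in> T \<Longrightarrow> b \<in> T \<Longrightarrow> n' (h a) (h b) = h (n a b)"
    and sg: "semigroup_on T n"
  shows "semigroup_on T' n'"
proof -
  have im: "T' = h ` T" using bij_betw_imp_surj_on[OF bij] by simp
  show ?thesis unfolding semigroup_on_def im
    using sg_cl[OF sg] sg_as[OF sg] by (auto simp: hom)
qed

lemma iso_inv:
  assumes bij: "bij_betw h T T'" and hom: "\<And>a b. a \<in> T \<Longrightarrow> b \<in> T \<Longrightarrow> n' (h a) (h b) = h (n a b)"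
    and sg: "semigroup_on T n" and a: "a \<in> T"
  shows "inverses T' n' (h a) = h ` inverses T n a"
proof -
  note cl = sg_cl[OF sg]
  have im: "T' = h ` T" using bij_betw_imp_surj_on[OF bij] by simp
  have inj: "inj_on h T" using bij_betw_imp_inj_on[OF bij] .
  have "b' \<in> inverses T' n' (h a) \<longleftrightarrow> b' \<in> h ` inverses T n a" for b'
  proof
    assume "b' \<in> inverses T' n' (h a)"
    then obtain b where b: "b \<in> T" "b' = h b" "n' (n' (h a) b') (h a) = h a" "n' (n' b' (h a)) b' = b'"
      unfolding inverses_def im by blast
    then have "h (n (n a b) a) = h a" "h (n (n b a) b) = h b" using a b cl by (simp_all add: hom)
    then have "n (n a b) a = a" "n (n b a) b = b" using inj_onD[OF inj] a b(1) cl by blast+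
    then show "b' \<in> h ` inverses T n a" using b unfolding inverses_def by blast
  next
    assume "b' \<in> h ` inverses T n a"
    then obtain b where b: "b \<in> T" "b' = h b" "n (n a b) a = a" "n (n b a) b = b"
      unfolding inverses_def by blast
    then show "b' \<in> inverses T' n' (h a)" unfolding inverses_def im using a cl[OF a b(1)] cl[OF b(1) a] by (simp add: hom)
  qed
  then show ?thesis by blast
qed

lemma iso_reg:
  assumes bij: "bij_betw h T T'" and hom: "\<And>a b. a \<in> T \<Longrightarrow> b \<in> T \<Longrightarrow> n' (h a) (h b) = h (n a b)"
    and sg: "semigroup_on T n" and r: "regular_sg T n"
  shows "regular_sg T' n'"
proof -
  have im: "T' = h ` T" using bij_betw_imp_surj_on[OF bij] by simp
  show ?thesis unfolding regular_sg_def
  proof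
    fix x assume "x \<in> T'"
    then have "x \<in> h ` T" using im by simp
    then obtain a where a: "a \<in> T" "x = h a" by blast
    then show "inverses T' n' x \<noteq> {}" using iso_inv[OF bij hom sg a(1)] r unfolding regular_sg_def by simp
  qed
qed

lemma iso_perm:
  assumes bij: "bij_betw h T T'" and hom: "\<And>a b. a \<in> T \<Longrightarrow> b \<in> T \<Longrightarrow> n' (h a) (h b) = h (n a b)"
    and sg: "semigroup_on T n" and p: "permutation_matching T n \<phi>"
  shows "permutation_matching T' n' (\<lambda>x. h (\<phi> (inv_into T h x)))"
proof -
  have b1: "bij_betw (inv_into T h) T' T" using bij by (simp add: bij_betw_inv_into)
  have bp: "bij_betw \<phi> T T" using p unfolding permutation_matching_def by blast
  have "bij_betw (h \<circ> (\<phi> \<circ> inv_into T h)) T' T'"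
    using bij_betw_trans[OF bij_betw_trans[OF b1 bp] bij] .
  moreover have "\<forall>a'\<in>T'. h (\<phi> (inv_into T h a')) \<in> inverses T' n' a'"
  proof
    fix a' assume a': "a' \<in> T'"
    define a where "a = inv_into T h a'"
    have a: "a \<in> T" "h a = a'" unfolding a_def
      using a' bij_betw_imp_surj_on[OF bij] by (auto intro: inv_into_into f_inv_into_f)
    have "\<phi> a \<in> inverses T n a" using p a unfolding permutation_matching_def by blast
    then show "h (\<phi> (inv_into T h a')) \<in> inverses T' n' a'"
      using iso_inv[OF bij hom sg a(1)] a a_def by auto
  qed
  ultimately show ?thesis unfolding permutation_matching_def comp_def by simp
qed

lemma iso_invol:
  assumes bij: "bij_betw h T T'" and hom: "\<And>a b. a \<in> T \<Longrightarrow> b \<in> T \<Longrightarrow> n' (h a) (h b) = h (n a b)"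
    and sg: "semigroup_on T n" and p: "involution_matching T n \<phi>"
  shows "involution_matching T' n' (\<lambda>x. h (\<phi> (inv_into T h x)))"
proof -
  have pm: "permutation_matching T' n' (\<lambda>x. h (\<phi> (inv_into T h x)))"
    using iso_perm[OF bij hom sg] p unfolding involution_matching_def by blast
  have bp: "bij_betw \<phi> T T" using p unfolding involution_matching_def permutation_matching_def by blast
  have inj: "inj_on h T" using bij_betw_imp_inj_on[OF bij] .
  have "h (\<phi> (inv_into T h (h (\<phi> (inv_into T h a'))))) = a'" if a': "a' \<in> T'" for a'
  proof -
    have a: "inv_into T h a' \<in> T" "h (inv_into T h a') = a'"
      using a' bij_betw_imp_surj_on[OF bij] by (auto intro: inv_into_into f_inv_into_f)
    have "\<phi> (inv_into T h a') \<in> T" using bij_betw_apply[OF bp a(1)] .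
    then have "inv_into T h (h (\<phi> (inv_into T h a'))) = \<phi> (inv_into T h a')"
      using inv_into_f_f[OF inj] by blast
    then show ?thesis using p a unfolding involution_matching_def by auto
  qed
  then show ?thesis using pm unfolding involution_matching_def by blast
qed

lemma iso_pni:
  assumes bij: "bij_betw h T T'" and hom: "\<And>a b. a \<in> T \<Longrightarrow> b \<in> T \<Longrightarrow> n' (h a) (h b) = h (n a b)"
    and sg: "semigroup_on T n" and p: "perm_not_inv T n"
  shows "perm_not_inv T' n'"
proof -
  have sg': "semigroup_on T' n'" using iso_sg[OF bij hom sg] .
  have b1: "bij_betw (inv_into T h) T' T" using bij by (simp add: bij_betw_inv_into)
  have inj: "inj_on h T" using bij_betw_imp_inj_on[OF bij] .
  have hom1: "n (inv_into T h a) (inv_into T h b) = inv_into T h (n' a b)" if ab0: "a \<in> T'" "b \<in> T'" for a b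
  proof -
    obtain a0 b0 where ab: "a0 \<in> T" "b0 \<in> T" "a = h a0" "b = h b0" using ab0 bij_betw_imp_surj_on[OF bij] by blast
    moreover have "n a0 b0 \<in> T" using sg_cl[OF sg ab(1,2)] .
    ultimately show ?thesis using hom inv_into_f_f[OF inj] by simp
  qed
  show ?thesis unfolding perm_not_inv_def
  proof
    show "\<exists>\<phi>. permutation_matching T' n' \<phi>" using iso_perm[OF bij hom sg] p unfolding perm_not_inv_def by blast
    show "\<not> (\<exists>\<phi>. involution_matching T' n' \<phi>)"
      using iso_invol[OF b1 hom1 sg'] p unfolding perm_not_inv_def by blast
  qed
qed

lemma min_transfer:
  fixes S :: "'a set" and T :: "'b set"
  assumes minimal: "\<forall>(T :: nat set) (n :: nat \<Rightarrow> nat \<Rightarrow> nat).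
        finite T \<and> semigroup_on T n \<and> regular_sg T n \<and> perm_not_inv T n \<longrightarrow> card S \<le> card T"
    and T: "finite T" "semigroup_on T n" "regular_sg T n" "perm_not_inv T n"
  shows "card S \<le> card T"
proof -
  obtain h where h: "bij_betw h T {0..<card T}" using ex_bij_betw_finite_nat[OF T(1)] by blast
  have inj: "inj_on h T" using bij_betw_imp_inj_on[OF h] .
  define n' where "n' a b = h (n (inv_into T h a) (inv_into T h b))" for a b
  have hom: "n' (h a) (h b) = h (n a b)" if "a \<in> T" "b \<in> T" for a b
    using that inv_into_f_f[OF inj] n'_def by simp
  have "card S \<le> card {0..<card T}"
    using minimal iso_sg[OF h hom T(2)] iso_reg[OF h hom T(2,3)] iso_pni[OF h hom T(2,4)] by blast
  then show ?thesis by simp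
qed

locale rsg =
  fixes S :: "'a set" and m :: "'a \<Rightarrow> 'a \<Rightarrow> 'a" (infixl "\<cdot>" 70)
  assumes fin: "finite S" and sg: "semigroup_on S m" and reg: "regular_sg S m"
begin

lemma closed[simp, intro]: "a \<in> S \<Longrightarrow> b \<in> S \<Longrightarrow> a \<cdot> b \<in> S"
  using sg unfolding semigroup_on_def by blast

lemma assoc[simp]: "a \<in> S \<Longrightarrow> b \<in> S \<Longrightarrow> c \<in> S \<Longrightarrow> a \<cdot> b \<cdot> c = a \<cdot> (b \<cdot> c)"
  using sg unfolding semigroup_on_def by blast

lemma inv_ex: "a \<in> S \<Longrightarrow> \<exists>b\<in>S. a \<cdot> b \<cdot> a = a \<and> b \<cdot> a \<cdot> b = b"
  using reg unfolding regular_sg_def inverses_def by blast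

lemma inverses_iff: "b \<in> inverses S m a \<longleftrightarrow> b \<in> S \<and> a \<cdot> b \<cdot> a = a \<and> b \<cdot> a \<cdot> b = b"
  unfolding inverses_def by blast

lemma inv_sym: "a \<in> S \<Longrightarrow> b \<in> inverses S m a \<Longrightarrow> a \<in> inverses S m b"
  unfolding inverses_def by blast

definition Rle where "Rle a b \<longleftrightarrow> (\<exists>s\<in>S. a = b \<cdot> s)"
definition Lle where "Lle a b \<longleftrightarrow> (\<exists>s\<in>S. a = s \<cdot> b)"
definition Jle where "Jle a b \<longleftrightarrow> (\<exists>u\<in>S. \<exists>v\<in>S. a = u \<cdot> b \<cdot> v)"
definition "Req a b \<longleftrightarrow> Rle a b \<and> Rle b a"
definition "Leq a b \<longleftrightarrow> Lle a b \<and> Lle b a"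
definition "Jeq a b \<longleftrightarrow> Jle a b \<and> Jle b a"
definition "Jcls a = {b\<in>S. Jeq a b}"

lemma Rle_refl: "a \<in> S \<Longrightarrow> Rle a a"
  unfolding Rle_def using inv_ex[of a] by (metis assoc closed)
lemma Lle_refl: "a \<in> S \<Longrightarrow> Lle a a"
  unfolding Lle_def using inv_ex[of a] by (metis closed)
lemma Jle_refl: "a \<in> S \<Longrightarrow> Jle a a"
  unfolding Jle_def using inv_ex[of a] by (metis assoc closed)
lemma Rle_trans: "a \<in> S \<Longrightarrow> b \<in> S \<Longrightarrow> c \<in> S \<Longrightarrow> Rle a b \<Longrightarrow> Rle b c \<Longrightarrow> Rle a c"
  unfolding Rle_def by (metis assoc closed)
lemma Lle_trans: "a \<in> S \<Longrightarrow> b \<in> S \<Longrightarrow> c \<in> S \<Longrightarrow> Lle a b \<Longrightarrow> Lle b c \<Longrightarrow> Lle a c"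
  unfolding Lle_def by (metis assoc closed)
lemma Jle_trans: "a \<in> S \<Longrightarrow> b \<in> S \<Longrightarrow> c \<in> S \<Longrightarrow> Jle a b \<Longrightarrow> Jle b c \<Longrightarrow> Jle a c"
  unfolding Jle_def by (metis assoc closed)
lemma Rle_Jle: "a \<in> S \<Longrightarrow> b \<in> S \<Longrightarrow> Rle a b \<Longrightarrow> Jle a b"
  unfolding Rle_def Jle_def using inv_ex[of b] by (metis assoc closed)
lemma Lle_Jle: "a \<in> S \<Longrightarrow> b \<in> S \<Longrightarrow> Lle a b \<Longrightarrow> Jle a b"
  unfolding Lle_def Jle_def using inv_ex[of b] by (metis assoc closed)
lemma Jle_prod1: "a \<in> S \<Longrightarrow> b \<in> S \<Longrightarrow> Jle (a \<cdot> b) a"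
  using Rle_Jle Rle_def by blast
lemma Jle_prod2: "a \<in> S \<Longrightarrow> b \<in> S \<Longrightarrow> Jle (a \<cdot> b) b"
  using Lle_Jle Lle_def by blast

fun pw :: "'a \<Rightarrow> nat \<Rightarrow> 'a" where
  "pw c 0 = c" | "pw c (Suc n) = c \<cdot> pw c n"

lemma pw_S[simp]: "c \<in> S \<Longrightarrow> pw c n \<in> S"
  by (induction n) auto

lemma pw_add: "c \<in> S \<Longrightarrow> pw c (Suc (i + j)) = pw c i \<cdot> pw c j"
  by (induction i) auto

lemma pigeon: "c \<in> S \<Longrightarrow> \<exists>p k. pw c p = pw c (Suc (p + k))"
proof -
  assume c: "c \<in> S"
  have "range (pw c) \<subseteq> S" using c by auto
  hence "finite (range (pw c))" using fin finite_subset by blast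
  hence "\<not> inj (pw c)" using finite_imageD infinite_UNIV_nat by blast
  then obtain p q where "p \<noteq> q" "pw c p = pw c q" unfolding inj_def by blast
  then show ?thesis
  proof (cases "p < q")
    case True
    then obtain k where "q = Suc (p + k)" using less_imp_Suc_add by blast
    then show ?thesis using \<open>pw c p = pw c q\<close> by blast
  next
    case False
    then obtain k where "p = Suc (q + k)" using \<open>p \<noteq> q\<close> less_imp_Suc_add by (metis linorder_neqE_nat)
    then show ?thesis using \<open>pw c p = pw c q\<close> by metis
  qed
qed

lemma Rstab: assumes a: "a \<in> S" and b: "b \<in> S" and J: "Jle b a" and R: "Rle a b" shows "Rle b a"
proof -
  obtain u where u: "u \<in> S" "a = b \<cdot> u" using R Rle_def by blast
  obtain x y where xy: "x \<in> S" "y \<in> S" "b = x \<cdot> a \<cdot> y" using J Jle_def by blast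
  define w where "w = u \<cdot> y"
  have w: "w \<in> S" using u xy w_def by auto
  have "x \<cdot> b \<cdot> w = x \<cdot> a \<cdot> y" using u w_def xy(1,2) b by simp
  hence b1: "b = x \<cdot> b \<cdot> w" using xy(3) by simp
  have bn: "b = pw x n \<cdot> b \<cdot> pw w n" for n
  proof (induction n)
    case 0 then show ?case using b1 by simp
  next
    case (Suc n)
    have "pw w (Suc n) = pw w n \<cdot> w" using pw_add[OF w, of n 0] by simp
    then have "pw x (Suc n) \<cdot> b \<cdot> pw w (Suc n) = x \<cdot> (pw x n \<cdot> b \<cdot> pw w n) \<cdot> w"
      using xy w b by simp
    then show ?case using Suc b1 by simp
  qed
  obtain p k where pk: "pw w p = pw w (Suc (p + k))" using pigeon[OF w] by blast
  have "b = pw x p \<cdot> b \<cdot> (pw w p \<cdot> pw w k)" using bn[of p] pk pw_add[OF w, of p k] by simp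
  also have "\<dots> = (pw x p \<cdot> b \<cdot> pw w p) \<cdot> pw w k" using xy(1,2) w b by simp
  also have "\<dots> = b \<cdot> pw w k" using bn[of p, symmetric] by simp
  finally have bk: "b = b \<cdot> pw w k" .
  have "b = b \<cdot> pw w k \<cdot> pw w k" using bk b w by (metis)
  also have "\<dots> = b \<cdot> pw w (Suc (k + k))" using pw_add[OF w, of k k] b w by simp
  also have "\<dots> = a \<cdot> (y \<cdot> pw w (k + k))" using u(1) xy(1,2) w b by (simp add: w_def u(2))
  finally show ?thesis unfolding Rle_def using xy w by auto
qed

lemma Lstab: assumes a: "a \<in> S" and b: "b \<in> S" and J: "Jle b a" and L: "Lle a b" shows "Lle b a"
proof -
  obtain u where u: "u \<in> S" "a = u \<cdot> b" using L Lle_def by blast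
  obtain x y where xy: "x \<in> S" "y \<in> S" "b = x \<cdot> a \<cdot> y" using J Jle_def by blast
  define w where "w = x \<cdot> u"
  have w: "w \<in> S" using u xy w_def by auto
  have "w \<cdot> b \<cdot> y = x \<cdot> a \<cdot> y" using u w_def xy(1,2) b by simp
  hence b1: "b = w \<cdot> b \<cdot> y" using xy(3) by simp
  have bn: "b = pw w n \<cdot> b \<cdot> pw y n" for n
  proof (induction n)
    case 0 then show ?case using b1 by simp
  next
    case (Suc n)
    have "pw y (Suc n) = pw y n \<cdot> y" using pw_add[OF xy(2), of n 0] by simp
    then have "pw w (Suc n) \<cdot> b \<cdot> pw y (Suc n) = w \<cdot> (pw w n \<cdot> b \<cdot> pw y n) \<cdot> y"
      using xy w b by simp
    then show ?case using Suc b1 by simp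
  qed
  obtain p k where pk: "pw w p = pw w (Suc (k + p))" using pigeon[OF w] by (metis add.commute)
  have "b = (pw w k \<cdot> pw w p) \<cdot> b \<cdot> pw y p" using bn[of p] pk pw_add[OF w, of k p] by simp
  also have "\<dots> = pw w k \<cdot> (pw w p \<cdot> b \<cdot> pw y p)" using xy(1,2) w b by simp
  also have "\<dots> = pw w k \<cdot> b" using bn[of p, symmetric] by simp
  finally have bk: "b = pw w k \<cdot> b" .
  have "b = pw w k \<cdot> (pw w k \<cdot> b)" using bk b w by (metis)
  also have "\<dots> = pw w (Suc (k + k)) \<cdot> b" using pw_add[OF w, of k k] b w by simp
  also have "\<dots> = pw w (k + k) \<cdot> w \<cdot> b" using pw_add[OF w, of "k+k" 0] by simp
  also have "\<dots> = (pw w (k + k) \<cdot> x) \<cdot> a" using u w_def xy(1,2) b by simp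
  finally show ?thesis unfolding Lle_def using xy w by auto
qed

lemma inv_exists_H:
  assumes x: "x \<in> S" and w: "w \<in> S" and J1: "Jle w x" and J2: "Jle x (x \<cdot> w)" and J3: "Jle x (w \<cdot> x)"
  shows "\<exists>y \<in> inverses S m x. Req y w \<and> Leq y w"
proof -
  have "Rle x (x \<cdot> w)" using Rstab[of "x \<cdot> w" x] J2 x w Rle_def by blast
  then obtain v where v: "v \<in> S" "x = x \<cdot> w \<cdot> v" using Rle_def by blast
  have "Lle x (w \<cdot> x)" using Lstab[of "w \<cdot> x" x] J3 x w Lle_def by blast
  then obtain u where u: "u \<in> S" "x = u \<cdot> (w \<cdot> x)" using Lle_def by blast
  obtain x' where x': "x' \<in> S" "x \<cdot> x' \<cdot> x = x" using inv_ex[OF x] by blast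
  define y1 where "y1 = w \<cdot> v \<cdot> x' \<cdot> u \<cdot> w"
  have y1: "y1 \<in> S" using y1_def w v(1) u(1) x'(1) by simp
  have "x \<cdot> y1 \<cdot> x = (x \<cdot> w \<cdot> v) \<cdot> x' \<cdot> (u \<cdot> (w \<cdot> x))" using x w v(1) u(1) x'(1) by (simp add: y1_def)
  also have "\<dots> = x" using v(2)[symmetric] u(2)[symmetric] x'(2) by simp
  finally have xy1: "x \<cdot> y1 \<cdot> x = x" .
  have e1: "x \<cdot> (y1 \<cdot> x) = x" using xy1 x y1 by simp
  have e2: "x \<cdot> (y1 \<cdot> (x \<cdot> t)) = x \<cdot> t" if "t \<in> S" for t
    using xy1 x y1 that by (metis assoc closed)
  define y where "y = y1 \<cdot> x \<cdot> y1"
  have y: "y \<in> S" using y_def x y1 by simp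
  have i1: "x \<cdot> y \<cdot> x = x" using x y1 e1 e2 by (simp add: y_def)
  have i2: "y \<cdot> x \<cdot> y = y" using x y1 e1 e2 by (simp add: y_def)
  have Jxy: "Jle x y" unfolding Jle_def using i1 x by metis
  have Jwy: "Jle w y" using Jle_trans[OF w x y J1 Jxy] .
  have "y = w \<cdot> (v \<cdot> x' \<cdot> u \<cdot> w \<cdot> x \<cdot> y1)" using x y1 w v(1) u(1) x'(1) by (simp add: y_def y1_def)
  hence R1: "Rle y w" unfolding Rle_def using x y1 w v(1) u(1) x'(1) by auto
  have "y = (y1 \<cdot> x \<cdot> w \<cdot> v \<cdot> x' \<cdot> u) \<cdot> w" using x y1 w v(1) u(1) x'(1) by (simp add: y_def y1_def)
  moreover have "y1 \<cdot> x \<cdot> w \<cdot> v \<cdot> x' \<cdot> u \<in> S" using x y1 w v(1) u(1) x'(1) by simp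
  ultimately have L1: "Lle y w" unfolding Lle_def by blast
  have "Rle w y" using Rstab[OF y w Jwy R1] .
  moreover have "Lle w y" using Lstab[OF y w Jwy L1] .
  ultimately show ?thesis using R1 L1 i1 i2 y unfolding Req_def Leq_def inverses_def by blast
qed



lemma inv_unique_H:
  assumes x: "x \<in> S" and y: "y \<in> inverses S m x" and y': "y' \<in> inverses S m x"
    and R: "Rle y' y" and L: "Lle y' y"
  shows "y' = y"
proof -
  obtain s where s: "s \<in> S" "y' = y \<cdot> s" using R Rle_def by blast
  obtain t where t: "t \<in> S" "y' = t \<cdot> y" using L Lle_def by blast
  have yS: "y \<in> S" "y' \<in> S" and a: "x \<cdot> y \<cdot> x = x" "y \<cdot> x \<cdot> y = y" "x \<cdot> y' \<cdot> x = x" "y' \<cdot> x \<cdot> y' = y'"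
    using y y' unfolding inverses_def by auto
  have 1: "y \<cdot> x \<cdot> y' = y'"
  proof -
    have "y \<cdot> x \<cdot> y' = (y \<cdot> x \<cdot> y) \<cdot> s" using s(1) yS(1) x by (simp add: s(2))
    then show ?thesis using a(2) s(2) by simp
  qed
  have 2: "y' \<cdot> x \<cdot> y = y'"
  proof -
    have "y' \<cdot> x \<cdot> y = t \<cdot> (y \<cdot> x \<cdot> y)" using t(1) yS(1) x by (simp add: t(2))
    then show ?thesis using a(2) t(2) by simp
  qed
  have "y = y \<cdot> (x \<cdot> y' \<cdot> x) \<cdot> y" using a(2,3) by simp
  also have "\<dots> = (y \<cdot> x \<cdot> y') \<cdot> x \<cdot> y" using yS x by simp
  also have "\<dots> = y'" using 1 2 by simp
  finally show ?thesis by simp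
qed

lemma inv_Jeq: assumes "a \<in> S" "b \<in> inverses S m a" shows "Jle a b \<and> Jle b a"
proof -
  have "b \<in> S" "a = a \<cdot> b \<cdot> a" "b = b \<cdot> a \<cdot> b" using assms unfolding inverses_def by auto
  then show ?thesis unfolding Jle_def using assms(1) by blast
qed

end

lemma invol_bij: "(\<And>x. x \<in> T \<Longrightarrow> \<psi> x \<in> T) \<Longrightarrow> (\<And>x. x \<in> T \<Longrightarrow> \<psi> (\<psi> x) = x) \<Longrightarrow> bij_betw \<psi> T T"
  by (rule bij_betw_byWitness[of T \<psi> \<psi>]) auto

context rsg begin

lemma Jcls_sub: "Jcls c \<subseteq> S" unfolding Jcls_def by auto

lemma Jcls_self: "c \<in> S \<Longrightarrow> c \<in> Jcls c"
  unfolding Jcls_def Jeq_def using Jle_refl by auto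

lemma Jcls_eq: assumes c: "c \<in> S" and y: "y \<in> Jcls c" shows "Jcls y = Jcls c"
  using y c Jle_trans unfolding Jcls_def Jeq_def by blast

lemma Jcls_mid: assumes c: "c \<in> S" and x: "x \<in> Jcls c" and y: "y \<in> Jcls c" and e: "e \<in> S"
  and J1: "Jle x e" and J2: "Jle e y" shows "e \<in> Jcls c"
proof -
  have xy: "x \<in> S" "y \<in> S" "Jle c x" "Jle y c" using x y unfolding Jcls_def Jeq_def by auto
  have "Jle c e" using Jle_trans[OF c xy(1) e xy(3) J1] .
  moreover have "Jle e c" using Jle_trans[OF e xy(2) c J2 xy(4)] .
  ultimately show ?thesis using e unfolding Jcls_def Jeq_def by auto
qed

lemma inv_D: assumes c: "c \<in> S" and x: "x \<in> Jcls c" and y: "y \<in> inverses S m x"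
  shows "y \<in> Jcls c" "x \<cdot> y \<in> Jcls c" "y \<cdot> x \<in> Jcls c"
proof -
  have xS: "x \<in> S" using x Jcls_sub by auto
  have yS: "y \<in> S" and e: "x \<cdot> y \<cdot> x = x" using y unfolding inverses_def by auto
  have "Jle x y \<and> Jle y x" using inv_Jeq[OF xS y] .
  then show "y \<in> Jcls c" using Jcls_mid[OF c x x yS] by blast
  have "Rle x (x \<cdot> y)" unfolding Rle_def using e xS by (metis assoc closed yS)
  then show "x \<cdot> y \<in> Jcls c" using Jcls_mid[OF c x x] Rle_Jle Jle_prod1 xS yS by auto
  have "x = x \<cdot> (y \<cdot> x)" using e xS yS by simp
  then have "Lle x (y \<cdot> x)" unfolding Lle_def using xS by blast
  then show "y \<cdot> x \<in> Jcls c" using Jcls_mid[OF c x x] Lle_Jle Jle_prod2 xS yS by auto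
qed

definition pfC :: "'a set \<Rightarrow> 'a option set" where "pfC D = insert None (Some ` D)"
definition pfM :: "'a set \<Rightarrow> 'a option \<Rightarrow> 'a option \<Rightarrow> 'a option" where
  "pfM D X Y = (case X of Some a \<Rightarrow> (case Y of Some b \<Rightarrow> if a \<cdot> b \<in> D then Some (a \<cdot> b) else None | None \<Rightarrow> None) | None \<Rightarrow> None)"

lemma pfM_simps[simp]: "pfM D None Y = None" "pfM D X None = None"
  "pfM D (Some a) (Some b) = (if a \<cdot> b \<in> D then Some (a \<cdot> b) else None)"
  unfolding pfM_def by (auto split: option.split)

lemma pf_sg: assumes c: "c \<in> S" shows "semigroup_on (pfC (Jcls c)) (pfM (Jcls c))"
proof -
  let ?D = "Jcls c"
  have assoc3: "pfM ?D (pfM ?D (Some x) (Some y)) (Some z) = pfM ?D (Some x) (pfM ?D (Some y) (Some z))"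
    if xyz: "x \<in> ?D" "y \<in> ?D" "z \<in> ?D" for x y z
  proof -
    have S: "x \<in> S" "y \<in> S" "z \<in> S" using xyz Jcls_sub by auto
    show ?thesis
    proof (cases "x \<cdot> y \<cdot> z \<in> ?D")
      case True
      have "x \<cdot> y \<in> ?D" using Jcls_mid[OF c True xyz(1)] S Jle_prod1[of "x \<cdot> y" z] Jle_prod1[of x y] by auto
      moreover have "y \<cdot> z \<in> ?D" using Jcls_mid[OF c True xyz(2)] S Jle_prod2[of x "y \<cdot> z"] Jle_prod1[of y z] by auto
      ultimately show ?thesis using True S by simp
    next
      case False
      then show ?thesis using S by auto
    qed
  qed
  show ?thesis unfolding semigroup_on_def pfC_def
    using assoc3 by (auto split: if_splits)
qed

lemma pf_inv_None: "inverses (pfC D) (pfM D) None = {None}"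
  unfolding inverses_def pfC_def by auto

lemma pf_inv_Some: assumes c: "c \<in> S" and x: "x \<in> Jcls c"
  shows "inverses (pfC (Jcls c)) (pfM (Jcls c)) (Some x) = Some ` inverses S m x"
proof -
  let ?D = "Jcls c"
  have xS: "x \<in> S" using x Jcls_sub by auto
  have "Y \<in> inverses (pfC ?D) (pfM ?D) (Some x) \<longleftrightarrow> Y \<in> Some ` inverses S m x" for Y
  proof
    assume Y: "Y \<in> inverses (pfC ?D) (pfM ?D) (Some x)"
    then obtain y where y: "Y = Some y" "y \<in> ?D" unfolding inverses_def pfC_def by auto
    have yS: "y \<in> S" using y Jcls_sub by auto
    from Y y have "x \<cdot> y \<cdot> x = x" "y \<cdot> x \<cdot> y = y" unfolding inverses_def by (auto split: if_splits)
    then show "Y \<in> Some ` inverses S m x" using y yS unfolding inverses_def by auto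
  next
    assume "Y \<in> Some ` inverses S m x"
    then obtain y where y: "Y = Some y" "y \<in> inverses S m x" by auto
    have d: "y \<in> ?D" "x \<cdot> y \<in> ?D" "y \<cdot> x \<in> ?D" using inv_D[OF c x y(2)] by auto
    have e: "x \<cdot> y \<cdot> x = x" "y \<cdot> x \<cdot> y = y" using y unfolding inverses_def by auto
    show "Y \<in> inverses (pfC ?D) (pfM ?D) (Some x)"
      unfolding inverses_def pfC_def using d e x y by auto
  qed
  then show ?thesis by blast
qed

lemma pf_perm: assumes c: "c \<in> S" and p: "permutation_matching S m \<phi>"
  shows "permutation_matching (pfC (Jcls c)) (pfM (Jcls c)) (map_option \<phi>)"
proof -
  let ?D = "Jcls c"
  have bp: "bij_betw \<phi> S S" and pi: "\<And>a. a \<in> S \<Longrightarrow> \<phi> a \<in> inverses S m a"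
    using p unfolding permutation_matching_def by auto
  have sub: "\<phi> ` ?D \<subseteq> ?D" using inv_D(1)[OF c] pi Jcls_sub by blast
  have inj: "inj_on \<phi> ?D" using bij_betw_imp_inj_on[OF bp] Jcls_sub inj_on_subset by blast
  have fD: "finite ?D" using fin Jcls_sub finite_subset by blast
  have eq: "\<phi> ` ?D = ?D" using endo_inj_surj[OF fD sub inj] .
  have "bij_betw (map_option \<phi>) (pfC ?D) (pfC ?D)"
    unfolding bij_betw_def pfC_def
  proof
    show "inj_on (map_option \<phi>) (insert None (Some ` ?D))"
      using inj unfolding inj_on_def by auto
    show "map_option \<phi> ` insert None (Some ` ?D) = insert None (Some ` ?D)"
    proof -
      have "(\<lambda>x. Some (\<phi> x)) ` ?D = Some ` ?D" using eq by (metis image_image)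
      then show ?thesis by (simp add: image_image)
    qed
  qed
  moreover have "\<forall>X\<in>pfC ?D. map_option \<phi> X \<in> inverses (pfC ?D) (pfM ?D) X"
  proof
    fix X assume "X \<in> pfC ?D"
    then consider "X = None" | x where "X = Some x" "x \<in> ?D" unfolding pfC_def by blast
    then show "map_option \<phi> X \<in> inverses (pfC ?D) (pfM ?D) X"
      using pf_inv_None pf_inv_Some[OF c] pi subsetD[OF Jcls_sub] by cases auto
  qed
  ultimately show ?thesis unfolding permutation_matching_def by blast
qed

lemma Jclass_counterexample:
  assumes pni: "perm_not_inv S m"
  shows "\<exists>c\<in>S. perm_not_inv (pfC (Jcls c)) (pfM (Jcls c))"
proof (rule ccontr)
  assume neg: "\<not> ?thesis"
  obtain \<phi> where p: "permutation_matching S m \<phi>" using pni perm_not_inv_def by blast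
  have allinv: "\<forall>c\<in>S. \<exists>\<psi>. involution_matching (pfC (Jcls c)) (pfM (Jcls c)) \<psi>"
    using neg pf_perm[OF _ p] unfolding perm_not_inv_def by blast
  define \<Psi> where "\<Psi> D = (SOME \<psi>. involution_matching (pfC D) (pfM D) \<psi>)" for D
  have Psi: "involution_matching (pfC (Jcls c)) (pfM (Jcls c)) (\<Psi> (Jcls c))" if "c \<in> S" for c
  proof -
    from allinv that obtain \<psi>0 where "involution_matching (pfC (Jcls c)) (pfM (Jcls c)) \<psi>0" by blast
    then show ?thesis unfolding \<Psi>_def by (rule someI[of "involution_matching (pfC (Jcls c)) (pfM (Jcls c))"])
  qed
  define \<psi> where "\<psi> x = the (\<Psi> (Jcls x) (Some x))" for x
  have key: "\<psi> x \<in> inverses S m x \<and> \<Psi> (Jcls x) (Some x) = Some (\<psi> x)" if x: "x \<in> S" for x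
  proof -
    have "\<Psi> (Jcls x) (Some x) \<in> inverses (pfC (Jcls x)) (pfM (Jcls x)) (Some x)"
      using Psi[OF x] Jcls_self[OF x] unfolding involution_matching_def permutation_matching_def pfC_def by blast
    then have "\<Psi> (Jcls x) (Some x) \<in> Some ` inverses S m x" using pf_inv_Some[OF x Jcls_self[OF x]] by simp
    then show ?thesis unfolding \<psi>_def by auto
  qed
  have inv: "\<psi> (\<psi> x) = x" if x: "x \<in> S" for x
  proof -
    have y: "\<psi> x \<in> inverses S m x" using key[OF x] by blast
    have yD: "\<psi> x \<in> Jcls x" using inv_D(1)[OF x Jcls_self[OF x] y] .
    have yS: "\<psi> x \<in> S" using y unfolding inverses_def by auto
    have eqc: "Jcls (\<psi> x) = Jcls x" using Jcls_eq[OF x yD] .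
    have "\<Psi> (Jcls x) (\<Psi> (Jcls x) (Some x)) = Some x"
      using Psi[OF x] Jcls_self[OF x] unfolding involution_matching_def pfC_def by blast
    then have "\<Psi> (Jcls x) (Some (\<psi> x)) = Some x" using key[OF x] by simp
    then show ?thesis using \<psi>_def[of "\<psi> x"] eqc by simp
  qed
  have inS: "\<psi> x \<in> S" if "x \<in> S" for x using key[OF that] unfolding inverses_def by auto
  have "involution_matching S m \<psi>"
    unfolding involution_matching_def permutation_matching_def
    using invol_bij[of S \<psi>] inS inv key by blast
  then show False using pni perm_not_inv_def by blast
qed

end

context rsg begin

lemma Req_sym: "Req a b \<Longrightarrow> Req b a" unfolding Req_def by auto
lemma Leq_sym: "Leq a b \<Longrightarrow> Leq b a" unfolding Leq_def by auto
lemma Req_trans: "a \<in> S \<Longrightarrow> b \<in> S \<Longrightarrow> c \<in> S \<Longrightarrow> Req a b \<Longrightarrow> Req b c \<Longrightarrow> Req a c"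
  unfolding Req_def using Rle_trans by blast
lemma Leq_trans: "a \<in> S \<Longrightarrow> b \<in> S \<Longrightarrow> c \<in> S \<Longrightarrow> Leq a b \<Longrightarrow> Leq b c \<Longrightarrow> Leq a c"
  unfolding Leq_def using Lle_trans by blast
lemma Req_refl: "a \<in> S \<Longrightarrow> Req a a" unfolding Req_def using Rle_refl by auto
lemma Leq_refl: "a \<in> S \<Longrightarrow> Leq a a" unfolding Leq_def using Lle_refl by auto

lemma simple_invol:
  assumes J: "\<forall>x\<in>S. \<forall>y\<in>S. Jle x y"
  shows "\<exists>\<psi>. involution_matching S m \<psi>"
proof -
  define \<psi> where "\<psi> x = (SOME y. y \<in> inverses S m x \<and> Req y x \<and> Leq y x)" for x
  have ex: "\<psi> x \<in> inverses S m x \<and> Req (\<psi> x) x \<and> Leq (\<psi> x) x" if x: "x \<in> S" for x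
  proof -
    have "\<exists>y. y \<in> inverses S m x \<and> Req y x \<and> Leq y x"
      using inv_exists_H[OF x x] J x by auto
    then show ?thesis unfolding \<psi>_def by (rule someI_ex)
  qed
  have inS: "\<psi> x \<in> S" if "x \<in> S" for x using ex[OF that] unfolding inverses_def by auto
  have inv: "\<psi> (\<psi> x) = x" if x: "x \<in> S" for x
  proof -
    let ?y = "\<psi> x"
    have y: "?y \<in> S" "?y \<in> inverses S m x" "Req ?y x" "Leq ?y x" using ex[OF x] inS[OF x] by auto
    have xy: "x \<in> inverses S m ?y" using inv_sym[OF x y(2)] .
    have w: "\<psi> ?y \<in> inverses S m ?y" "Req (\<psi> ?y) ?y" "Leq (\<psi> ?y) ?y" "\<psi> ?y \<in> S" using ex[OF y(1)] inS[OF y(1)] by auto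
    have "Req (\<psi> ?y) x" using Req_trans[OF w(4) y(1) x w(2) y(3)] .
    moreover have "Leq (\<psi> ?y) x" using Leq_trans[OF w(4) y(1) x w(3) y(4)] .
    ultimately show ?thesis using inv_unique_H[OF y(1) xy w(1)] unfolding Req_def Leq_def by blast
  qed
  have "involution_matching S m \<psi>"
    unfolding involution_matching_def permutation_matching_def
    using invol_bij[of S \<psi>] inS inv ex by blast
  then show ?thesis by blast
qed

lemma perm_maps_D:
  assumes c: "c \<in> S" and p: "permutation_matching S m \<phi>"
  shows "\<phi> ` Jcls c = Jcls c" "inj_on \<phi> (Jcls c)"
proof -
  let ?D = "Jcls c"
  have bp: "bij_betw \<phi> S S" and pi: "\<And>a. a \<in> S \<Longrightarrow> \<phi> a \<in> inverses S m a"
    using p unfolding permutation_matching_def by auto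
  have sub: "\<phi> ` ?D \<subseteq> ?D" using inv_D(1)[OF c] pi Jcls_sub by blast
  show inj: "inj_on \<phi> ?D" using bij_betw_imp_inj_on[OF bp] Jcls_sub inj_on_subset by blast
  have fD: "finite ?D" using fin Jcls_sub finite_subset by blast
  show "\<phi> ` ?D = ?D" using endo_inj_surj[OF fD sub inj] .
qed

lemma sub_counterexample:
  assumes pni: "perm_not_inv S m" and c: "c \<in> S" and Sz: "S = insert z (Jcls c)" and z: "z \<notin> Jcls c"
    and clD: "\<forall>x\<in>Jcls c. \<forall>y\<in>Jcls c. x \<cdot> y \<in> Jcls c"
  shows "semigroup_on (Jcls c) m" "regular_sg (Jcls c) m" "perm_not_inv (Jcls c) m"
proof -
  let ?D = "Jcls c"
  have DS: "?D \<subseteq> S" using Jcls_sub .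
  have zS: "z \<in> S" using Sz by auto
  show sgD: "semigroup_on ?D m" unfolding semigroup_on_def using clD DS by (auto simp: subset_iff)
  have invD: "inverses ?D m x = inverses S m x" if x: "x \<in> ?D" for x
    using inv_D(1)[OF c x] DS unfolding inverses_def by blast
  show "regular_sg ?D m" using reg invD DS unfolding regular_sg_def by auto
  obtain \<phi> where p: "permutation_matching S m \<phi>" using pni perm_not_inv_def by blast
  have pi: "\<And>a. a \<in> S \<Longrightarrow> \<phi> a \<in> inverses S m a" using p unfolding permutation_matching_def by auto
  have "bij_betw \<phi> ?D ?D" using perm_maps_D[OF c p] unfolding bij_betw_def by simp
  then have pD: "permutation_matching ?D m \<phi>" unfolding permutation_matching_def using invD pi DS by auto
  have zz: "z \<in> inverses S m z"
  proof -
    have y: "\<phi> z \<in> inverses S m z" using pi zS .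
    have "\<phi> z \<in> Jcls z" using inv_D(1)[OF zS Jcls_self[OF zS] y] .
    moreover have "\<phi> z \<in> S" using y unfolding inverses_def by auto
    ultimately have "\<phi> z = z"
      using Sz z Jcls_eq[OF zS] Jcls_eq[OF c] Jcls_self[OF zS] by blast
    then show ?thesis using y by simp
  qed
  have "\<not> (\<exists>\<psi>. involution_matching ?D m \<psi>)"
  proof
    assume "\<exists>\<psi>. involution_matching ?D m \<psi>"
    then obtain \<psi> where \<psi>: "involution_matching ?D m \<psi>" by blast
    have \<psi>i: "\<And>x. x \<in> ?D \<Longrightarrow> \<psi> x \<in> inverses S m x" "\<And>x. x \<in> ?D \<Longrightarrow> \<psi> (\<psi> x) = x"
      using \<psi> invD unfolding involution_matching_def permutation_matching_def by auto
    have \<psi>b: "bij_betw \<psi> ?D ?D" using \<psi> unfolding involution_matching_def permutation_matching_def by blast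
    have \<psi>D: "\<And>x. x \<in> ?D \<Longrightarrow> \<psi> x \<in> ?D" using bij_betw_apply[OF \<psi>b] .
    define \<psi>' where "\<psi>' x = (if x = z then z else \<psi> x)" for x
    have "\<forall>x\<in>S. \<psi>' x \<in> S \<and> \<psi>' (\<psi>' x) = x \<and> \<psi>' x \<in> inverses S m x"
      using \<psi>i \<psi>D zz Sz z unfolding \<psi>'_def by auto
    then have "involution_matching S m \<psi>'"
      unfolding involution_matching_def permutation_matching_def using invol_bij[of S \<psi>'] by blast
    then show False using pni perm_not_inv_def by blast
  qed
  then show "perm_not_inv ?D m" using pD unfolding perm_not_inv_def by blast
qed

lemma zero_arises:
  assumes c: "c \<in> S" and Sz: "S = insert z (Jcls c)" and z: "z \<notin> Jcls c"
    and x: "x \<in> Jcls c" and y: "y \<in> Jcls c" and xy: "x \<cdot> y \<notin> Jcls c"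
  shows "\<forall>s\<in>S. z \<cdot> s = z \<and> s \<cdot> z = z"
proof
  fix s assume s: "s \<in> S"
  have xyS: "x \<in> S" "y \<in> S" using x y Jcls_sub by auto
  have zxy: "z = x \<cdot> y" using xy Sz xyS by auto
  have zS: "z \<in> S" using Sz by auto
  have "z \<cdot> s \<notin> Jcls c"
  proof
    assume a: "z \<cdot> s \<in> Jcls c"
    have "Jle (z \<cdot> s) z" using Jle_prod1 zS s by auto
    moreover have "Jle z x" using Jle_prod1 xyS zxy by auto
    ultimately have "z \<in> Jcls c" using Jcls_mid[OF c a x zS] by auto
    then show False using z by simp
  qed
  moreover have "s \<cdot> z \<notin> Jcls c"
  proof
    assume a: "s \<cdot> z \<in> Jcls c"
    have "Jle (s \<cdot> z) z" using Jle_prod2 zS s by auto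
    moreover have "Jle z x" using Jle_prod1 xyS zxy by auto
    ultimately have "z \<in> Jcls c" using Jcls_mid[OF c a x zS] by auto
    then show False using z by simp
  qed
  ultimately show "z \<cdot> s = z \<and> s \<cdot> z = z" using Sz s zS by auto
qed

end

locale zs = rsg +
  fixes z :: 'a and D :: "'a set"
  assumes Sz: "S = insert z D" and zD: "z \<notin> D"
    and zero: "\<forall>s\<in>S. z \<cdot> s = z \<and> s \<cdot> z = z"
    and DJ: "\<forall>x\<in>D. \<forall>y\<in>D. Jle x y" and Dne: "D \<noteq> {}"
begin

lemma zS[simp]: "z \<in> S" using Sz by auto
lemma DS: "x \<in> D \<Longrightarrow> x \<in> S" using Sz by auto
lemma zl[simp]: "s \<in> S \<Longrightarrow> z \<cdot> s = z" using zero by auto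
lemma zr[simp]: "s \<in> S \<Longrightarrow> s \<cdot> z = z" using zero by auto
lemma nzD: "x \<in> S \<Longrightarrow> x \<noteq> z \<Longrightarrow> x \<in> D" using Sz by auto
lemma Dnz: "x \<in> D \<Longrightarrow> x \<noteq> z" using zD by auto

lemma Rprod: assumes x: "x \<in> D" and y: "y \<in> D" and nz: "x \<cdot> y \<noteq> z" shows "Req (x \<cdot> y) x"
proof -
  have xy: "x \<cdot> y \<in> D" using nzD nz DS x y by auto
  have "Rle (x \<cdot> y) x" unfolding Rle_def using DS y by auto
  moreover have "Jle x (x \<cdot> y)" using DJ x xy by auto
  ultimately show ?thesis unfolding Req_def using Rstab[of "x \<cdot> y" x] DS x xy by auto
qed

lemma Lprod: assumes x: "x \<in> D" and y: "y \<in> D" and nz: "x \<cdot> y \<noteq> z" shows "Leq (x \<cdot> y) y"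
proof -
  have xy: "x \<cdot> y \<in> D" using nzD nz DS x y by auto
  have "Lle (x \<cdot> y) y" unfolding Lle_def using DS x by auto
  moreover have "Jle y (x \<cdot> y)" using DJ y xy by auto
  ultimately show ?thesis unfolding Leq_def using Lstab[of "x \<cdot> y" y] DS y xy by auto
qed

lemma dep: assumes x: "x \<in> D" "x' \<in> D" and y: "y \<in> D" "y' \<in> D"
  and L: "Lle x x'" and R: "Rle y y'" and nz: "x \<cdot> y \<noteq> z"
  shows "x' \<cdot> y' \<noteq> z"
proof
  assume a: "x' \<cdot> y' = z"
  obtain u where u: "u \<in> S" "x = u \<cdot> x'" using L Lle_def by blast
  obtain v where v: "v \<in> S" "y = y' \<cdot> v" using R Rle_def by blast
  have "x \<cdot> y = u \<cdot> (x' \<cdot> y') \<cdot> v" using u v DS x y by simp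
  then show False using a nz u v by simp
qed

lemma meet: assumes x: "x \<in> D" and y: "y \<in> D" shows "\<exists>w\<in>D. Req w x \<and> Leq w y"
proof -
  obtain u v where uv: "u \<in> S" "v \<in> S" "y = u \<cdot> x \<cdot> v" using DJ x y Jle_def by blast
  define w where "w = x \<cdot> v"
  have wS: "w \<in> S" using w_def uv DS x by auto
  have yw: "y = u \<cdot> w" using uv DS x w_def by simp
  have "w \<noteq> z" using yw Dnz[OF y] uv by auto
  then have wD: "w \<in> D" using nzD wS by auto
  have "Rle w x" unfolding Rle_def w_def using uv by auto
  moreover have "Jle x w" using DJ x wD by auto
  ultimately have "Req w x" unfolding Req_def using Rstab[of w x] wS DS x by auto
  moreover have "Lle y w" unfolding Lle_def using yw uv by auto
  moreover have "Jle w y" using DJ y wD by auto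
  ultimately show ?thesis unfolding Leq_def using Lstab[of y w] wS DS y wD by auto
qed

lemma inv_nz: assumes x: "x \<in> D" and y: "y \<in> inverses S m x"
  shows "y \<in> D" "x \<cdot> y \<noteq> z" "y \<cdot> x \<noteq> z"
proof -
  have yS: "y \<in> S" and e: "x \<cdot> y \<cdot> x = x" using y unfolding inverses_def by auto
  have xS: "x \<in> S" using DS[OF x] .
  show n1: "x \<cdot> y \<noteq> z"
  proof
    assume "x \<cdot> y = z"
    then have "x = z \<cdot> x" using e by simp
    then have "x = z" using zl[OF xS] by simp
    then show False using Dnz[OF x] by simp
  qed
  show n2: "y \<cdot> x \<noteq> z"
  proof
    assume a: "y \<cdot> x = z"
    have "x = x \<cdot> (y \<cdot> x)" using e xS yS by simp
    then have "x = x \<cdot> z" unfolding a .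
    then have "x = z" using zr[OF xS] by simp
    then show False using Dnz[OF x] by simp
  qed
  have "y \<noteq> z" using n2 xS by auto
  then show "y \<in> D" using nzD yS by auto
qed

lemma exist_inv: assumes x: "x \<in> D" and w: "w \<in> D" and n1: "x \<cdot> w \<noteq> z" and n2: "w \<cdot> x \<noteq> z"
  shows "\<exists>y\<in>inverses S m x. Req y w \<and> Leq y w"
proof -
  have "x \<cdot> w \<in> D" "w \<cdot> x \<in> D" using nzD n1 n2 DS x w by auto
  then show ?thesis using inv_exists_H[OF DS[OF x] DS[OF w]] DJ x w by auto
qed

definition "rR x = (SOME r. r \<in> D \<and> Req r x)"
definition "rL x = (SOME r. r \<in> D \<and> Leq r x)"

lemma rR: "x \<in> D \<Longrightarrow> rR x \<in> D \<and> Req (rR x) x"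
  unfolding rR_def by (rule someI[of _ x]) (use Req_refl DS in auto)
lemma rL: "x \<in> D \<Longrightarrow> rL x \<in> D \<and> Leq (rL x) x"
  unfolding rL_def by (rule someI[of _ x]) (use Leq_refl DS in auto)

lemma rR_eq: assumes x: "x \<in> D" and y: "y \<in> D" shows "rR x = rR y \<longleftrightarrow> Req x y"
proof
  assume "rR x = rR y"
  then show "Req x y" using rR[OF x] rR[OF y] Req_trans Req_sym DS x y by metis
next
  assume xy: "Req x y"
  have e: "(\<lambda>r. r \<in> D \<and> Req r x) = (\<lambda>r. r \<in> D \<and> Req r y)"
    using xy Req_trans Req_sym DS x y by (intro ext) blast
  then show "rR x = rR y" unfolding rR_def by (simp only: e)
qed

lemma rL_eq: assumes x: "x \<in> D" and y: "y \<in> D" shows "rL x = rL y \<longleftrightarrow> Leq x y"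
proof
  assume "rL x = rL y"
  then show "Leq x y" using rL[OF x] rL[OF y] Leq_trans Leq_sym DS x y by metis
next
  assume xy: "Leq x y"
  have e: "(\<lambda>r. r \<in> D \<and> Leq r x) = (\<lambda>r. r \<in> D \<and> Leq r y)"
    using xy Leq_trans Leq_sym DS x y by (intro ext) blast
  then show "rL x = rL y" unfolding rL_def by (simp only: e)
qed

definition "fm x = (if x = z then None else Some (rR x, rL x))"
definition "Ii = rR ` D"
definition "Ll = rL ` D"
definition "Pm l i = (l \<cdot> i \<noteq> z)"

lemma key: assumes x: "x \<in> D" and y: "y \<in> D" shows "x \<cdot> y \<noteq> z \<longleftrightarrow> Pm (rL x) (rR y)"
proof
  have a: "rL x \<in> D" "Leq (rL x) x" "rR y \<in> D" "Req (rR y) y" using rL[OF x] rR[OF y] by auto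
  { assume "x \<cdot> y \<noteq> z"
    then show "Pm (rL x) (rR y)" unfolding Pm_def
      using dep[OF x a(1) y a(3)] a unfolding Leq_def Req_def by blast }
  { assume "Pm (rL x) (rR y)"
    then show "x \<cdot> y \<noteq> z" unfolding Pm_def
      using dep[OF a(1) x a(3) y] a unfolding Leq_def Req_def by blast }
qed

lemma fm_hom: assumes x: "x \<in> S" and y: "y \<in> S" shows "fm (x \<cdot> y) = rees_mult Pm (fm x) (fm y)"
proof (cases "x = z \<or> y = z")
  case True then show ?thesis using x y unfolding fm_def rees_mult_def by auto
next
  case False
  then have xD: "x \<in> D" and yD: "y \<in> D" using nzD x y by auto
  show ?thesis
  proof (cases "x \<cdot> y = z")
    case True
    then have "\<not> Pm (rL x) (rR y)" using key[OF xD yD] by simp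
    then show ?thesis using True False unfolding fm_def rees_mult_def by auto
  next
    case nz: False
    then have P: "Pm (rL x) (rR y)" using key[OF xD yD] by simp
    have xyD: "x \<cdot> y \<in> D" using nzD nz x y by auto
    have "rR (x \<cdot> y) = rR x" using rR_eq[OF xyD xD] Rprod[OF xD yD nz] by simp
    moreover have "rL (x \<cdot> y) = rL y" using rL_eq[OF xyD yD] Lprod[OF xD yD nz] by simp
    ultimately show ?thesis using P nz False unfolding fm_def rees_mult_def by auto
  qed
qed

lemma fm_img: "fm ` S = insert None (Some ` (Ii \<times> Ll))"
proof
  show "fm ` S \<subseteq> insert None (Some ` (Ii \<times> Ll))"
    unfolding fm_def Ii_def Ll_def using nzD by auto
  show "insert None (Some ` (Ii \<times> Ll)) \<subseteq> fm ` S"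
  proof
    fix b assume "b \<in> insert None (Some ` (Ii \<times> Ll))"
    then consider "b = None" | x y where "x \<in> D" "y \<in> D" "b = Some (rR x, rL y)"
      unfolding Ii_def Ll_def by blast
    then show "b \<in> fm ` S"
    proof cases
      case 1
      have "fm z = None" unfolding fm_def by simp
      then show ?thesis using 1 rev_image_eqI[OF zS] by metis
    next
      case 2
      obtain w where w: "w \<in> D" "Req w x" "Leq w y" using meet[OF 2(1,2)] by blast
      have "fm w = b" using rR_eq[OF w(1) 2(1)] rL_eq[OF w(1) 2(2)] w 2 Dnz unfolding fm_def by auto
      then show ?thesis using DS[OF w(1)] by blast
    qed
  qed
qed

lemma fm_eq: assumes x: "x \<in> D" and y: "y \<in> D" shows "fm x = fm y \<longleftrightarrow> Req x y \<and> Leq x y"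
  using rR_eq[OF x y] rL_eq[OF x y] Dnz x y unfolding fm_def by auto

lemma P_reg: "\<forall>l\<in>Ll. \<exists>i\<in>Ii. Pm l i" "\<forall>i\<in>Ii. \<exists>l\<in>Ll. Pm l i"
proof -
  show "\<forall>l\<in>Ll. \<exists>i\<in>Ii. Pm l i"
  proof
    fix l assume "l \<in> Ll"
    then obtain x where x: "x \<in> D" "l = rL x" unfolding Ll_def by blast
    obtain y where y: "y \<in> inverses S m x" using reg DS[OF x(1)] unfolding regular_sg_def by blast
    have "y \<in> D" "x \<cdot> y \<noteq> z" using inv_nz[OF x(1) y] by auto
    then show "\<exists>i\<in>Ii. Pm l i" using key[OF x(1)] x unfolding Ii_def by blast
  qed
  show "\<forall>i\<in>Ii. \<exists>l\<in>Ll. Pm l i"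
  proof
    fix i assume "i \<in> Ii"
    then obtain x where x: "x \<in> D" "i = rR x" unfolding Ii_def by blast
    obtain y where y: "y \<in> inverses S m x" using reg DS[OF x(1)] unfolding regular_sg_def by blast
    have "y \<in> D" "y \<cdot> x \<noteq> z" using inv_nz[OF x(1) y] by auto
    then show "\<exists>l\<in>Ll. Pm l i" using key[OF _ x(1)] x unfolding Ll_def by blast
  qed
qed

lemma H_trivial_case:
  assumes Ht: "\<forall>x\<in>D. \<forall>y\<in>D. Req x y \<and> Leq x y \<longrightarrow> x = y"
  shows "zero_rectangular_band S m"
proof -
  have "inj_on fm S"
  proof (rule inj_onI)
    fix x y assume xy: "x \<in> S" "y \<in> S" "fm x = fm y"
    show "x = y"
    proof (cases "x = z \<or> y = z")
      case True then show ?thesis using xy unfolding fm_def by (auto split: if_splits)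
    next
      case False
      then have "x \<in> D" "y \<in> D" using nzD xy by auto
      then show ?thesis using fm_eq Ht xy by blast
    qed
  qed
  then have b: "bij_betw fm S (insert None (Some ` (Ii \<times> Ll)))" unfolding bij_betw_def using fm_img by blast
  have ne: "Ii \<noteq> {}" "Ll \<noteq> {}" using Dne unfolding Ii_def Ll_def by auto
  show ?thesis unfolding zero_rectangular_band_def
    apply (rule exI[of _ Ii], rule exI[of _ Ll], rule exI[of _ Pm], rule exI[of _ fm])
    using b ne P_reg fm_hom by blast
qed

end

lemma hom_sg:
  assumes sg: "semigroup_on S m" and hom: "\<And>x y. x \<in> S \<Longrightarrow> y \<in> S \<Longrightarrow> h (m x y) = n (h x) (h y)"
  shows "semigroup_on (h ` S) n"
proof -
  have cl: "\<And>a b. a \<in> S \<Longrightarrow> b \<in> S \<Longrightarrow> m a b \<in> S" using sg_cl[OF sg] .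
  have as: "\<And>a b c. a \<in> S \<Longrightarrow> b \<in> S \<Longrightarrow> c \<in> S \<Longrightarrow> m (m a b) c = m a (m b c)" using sg_as[OF sg] .
  show ?thesis unfolding semigroup_on_def
  proof (intro conjI ballI)
    fix X Y assume "X \<in> h ` S" "Y \<in> h ` S"
    then obtain x y where "x \<in> S" "y \<in> S" "X = h x" "Y = h y" by blast
    then show "n X Y \<in> h ` S" using hom[symmetric] cl by blast
  next
    fix X Y Z assume "X \<in> h ` S" "Y \<in> h ` S" "Z \<in> h ` S"
    then obtain x y w where xyw: "x \<in> S" "y \<in> S" "w \<in> S" "X = h x" "Y = h y" "Z = h w" by blast
    then show "n (n X Y) Z = n X (n Y Z)" using hom[symmetric] cl as by metis
  qed
qed

lemma hom_inv:
  assumes sg: "semigroup_on S m" and hom: "\<And>x y. x \<in> S \<Longrightarrow> y \<in> S \<Longrightarrow> h (m x y) = n (h x) (h y)"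
    and x: "x \<in> S" and y: "y \<in> inverses S m x"
  shows "h y \<in> inverses (h ` S) n (h x)"
proof -
  have yS: "y \<in> S" and e: "m (m x y) x = x" "m (m y x) y = y" using y unfolding inverses_def by auto
  have "n (n (h x) (h y)) (h x) = h x" using hom[symmetric] e sg_cl[OF sg] x yS by metis
  moreover have "n (n (h y) (h x)) (h y) = h y" using hom[symmetric] e sg_cl[OF sg] x yS by metis
  ultimately show ?thesis unfolding inverses_def using yS by blast
qed

context zs begin

abbreviation "B \<equiv> fm ` S"
abbreviation "mB \<equiv> rees_mult Pm"

lemma fm_z[simp]: "fm z = None" unfolding fm_def by simp
lemma fm_D: "x \<in> D \<Longrightarrow> fm x \<noteq> None" unfolding fm_def using Dnz by auto
lemma B_eq: "B = insert None (fm ` D)"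
proof
  show "B \<subseteq> insert None (fm ` D)"
  proof
    fix b assume "b \<in> B"
    then obtain x where x: "x \<in> S" "b = fm x" by blast
    show "b \<in> insert None (fm ` D)"
    proof (cases "x = z")
      case True then show ?thesis using x by simp
    next
      case False then show ?thesis using x nzD by blast
    qed
  qed
  show "insert None (fm ` D) \<subseteq> B" using zS DS fm_z by (metis image_eqI image_mono insert_subset subsetI)
qed

lemma mB_None[simp]: "mB None X = None" "mB X None = None" unfolding rees_mult_def by (auto split: option.split)

lemma fxyx: assumes x: "x \<in> D" and y: "y \<in> D"
  shows "fm (x \<cdot> y \<cdot> x) = fm x \<longleftrightarrow> x \<cdot> y \<noteq> z \<and> y \<cdot> x \<noteq> z"
proof
  assume a: "fm (x \<cdot> y \<cdot> x) = fm x"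
  have xS: "x \<in> S" "y \<in> S" using DS x y by auto
  have "x \<cdot> y \<cdot> x \<noteq> z"
  proof
    assume "x \<cdot> y \<cdot> x = z"
    then have "fm (x \<cdot> y \<cdot> x) = None" by simp
    then show False using a fm_D[OF x] by simp
  qed
  then show "x \<cdot> y \<noteq> z \<and> y \<cdot> x \<noteq> z" using xS by (metis assoc zl zr)
next
  assume a: "x \<cdot> y \<noteq> z \<and> y \<cdot> x \<noteq> z"
  have xyD: "x \<cdot> y \<in> D" using nzD a DS x y by auto
  have L1: "Leq (x \<cdot> y) y" using Lprod[OF x y] a by auto
  have R1: "Req (x \<cdot> y) x" using Rprod[OF x y] a by auto
  have "Pm (rL y) (rR x)" using key[OF y x] a by simp
  moreover have "rL (x \<cdot> y) = rL y" using rL_eq[OF xyD y] L1 by simp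
  ultimately have nz: "x \<cdot> y \<cdot> x \<noteq> z" using key[OF xyD x] by simp
  have xyxD: "x \<cdot> y \<cdot> x \<in> D" using nzD nz DS x y by auto
  have "Req (x \<cdot> y \<cdot> x) x" using Rprod[OF xyD x nz] R1 Req_trans DS xyD xyxD x by blast
  moreover have "Leq (x \<cdot> y \<cdot> x) x" using Lprod[OF xyD x nz] .
  ultimately show "fm (x \<cdot> y \<cdot> x) = fm x" using fm_eq[OF xyxD x] by simp
qed

lemma VB: assumes x: "x \<in> D" and y: "y \<in> D"
  shows "fm y \<in> inverses B mB (fm x) \<longleftrightarrow> x \<cdot> y \<noteq> z \<and> y \<cdot> x \<noteq> z"
proof -
  have xS: "x \<in> S" "y \<in> S" using DS x y by auto
  have "mB (mB (fm x) (fm y)) (fm x) = fm (x \<cdot> y \<cdot> x)" using fm_hom[of "x \<cdot> y" x] fm_hom[of x y] xS closed by metis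
  moreover have "mB (mB (fm y) (fm x)) (fm y) = fm (y \<cdot> x \<cdot> y)" using fm_hom[of "y \<cdot> x" y] fm_hom[of y x] xS closed by metis
  ultimately show ?thesis unfolding inverses_def using fxyx[OF x y] fxyx[OF y x] xS by auto
qed

lemma VB_None: assumes x: "x \<in> D" shows "None \<notin> inverses B mB (fm x)"
  unfolding inverses_def using fm_D[OF x] by auto

definition "fib w = {x \<in> D. fm x = fm w}"

lemma fib_alt: "w \<in> D \<Longrightarrow> fib w = {x \<in> D. Req x w \<and> Leq x w}"
  unfolding fib_def using fm_eq by blast

lemma fib_fin: "finite (fib w)" unfolding fib_def using fin Sz finite_subset by auto

lemma green_R: assumes w1: "w1 \<in> D" and w2: "w2 \<in> D" and R: "Req w1 w2"
  shows "card (fib w1) \<le> card (fib w2)"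
proof -
  obtain s where s: "s \<in> S" "w2 = w1 \<cdot> s" using R unfolding Req_def Rle_def by blast
  obtain t where t: "t \<in> S" "w1 = w2 \<cdot> t" using R unfolding Req_def Rle_def by blast
  have w: "w1 \<in> S" "w2 \<in> S" using DS w1 w2 by auto
  have main: "x \<cdot> s \<in> fib w2 \<and> x \<cdot> s \<cdot> t = x" if x: "x \<in> fib w1" for x
  proof -
    have xD: "x \<in> D" and xR: "Req x w1" and xL: "Leq x w1" using x fib_alt[OF w1] by auto
    have xS: "x \<in> S" using DS xD by auto
    obtain u where u: "u \<in> S" "x = u \<cdot> w1" using xL unfolding Leq_def Lle_def by blast
    obtain v where v: "v \<in> S" "w1 = v \<cdot> x" using xL unfolding Leq_def Lle_def by blast
    have "x \<cdot> s \<cdot> t = u \<cdot> (w1 \<cdot> s) \<cdot> t" using u(1) s(1) t(1) w by (simp add: u(2))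
    also have "\<dots> = u \<cdot> w1" using u(1) s(1) t(1) w by (simp add: s(2)[symmetric] t(2)[symmetric])
    finally have xst: "x \<cdot> s \<cdot> t = x" using u(2) by simp
    have xsS: "x \<cdot> s \<in> S" using xS s by auto
    have "x \<cdot> s \<noteq> z"
    proof
      assume "x \<cdot> s = z"
      then have "x = z \<cdot> t" using xst by simp
      then show False using Dnz[OF xD] zl[OF t(1)] by simp
    qed
    then have xsD: "x \<cdot> s \<in> D" using nzD xsS by auto
    have "Rle (x \<cdot> s) x" unfolding Rle_def using s by auto
    moreover have "Rle x (x \<cdot> s)" unfolding Rle_def using t xst by metis
    ultimately have "Req (x \<cdot> s) x" unfolding Req_def by auto
    then have R2: "Req (x \<cdot> s) w2" using Req_trans[OF xsS xS w(1)] Req_trans[OF xsS w(1) w(2)] xR R by blast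
    have "x \<cdot> s = u \<cdot> w2" using u(1) s(1) w by (simp add: u(2) s(2))
    then have "Lle (x \<cdot> s) w2" unfolding Lle_def using u by blast
    moreover have "w2 = v \<cdot> (x \<cdot> s)" using v(1) s(1) xS by (simp add: s(2) v(2))
    then have "Lle w2 (x \<cdot> s)" unfolding Lle_def using v by blast
    ultimately have "Leq (x \<cdot> s) w2" unfolding Leq_def by auto
    then show ?thesis using xst R2 xsD fib_alt[OF w2] by auto
  qed
  have "inj_on (\<lambda>x. x \<cdot> s) (fib w1)"
    by (rule inj_onI) (metis main)
  moreover have "(\<lambda>x. x \<cdot> s) ` fib w1 \<subseteq> fib w2" using main by auto
  ultimately show ?thesis using card_inj_on_le fib_fin by blast
qed

lemma green_L: assumes w1: "w1 \<in> D" and w2: "w2 \<in> D" and L: "Leq w1 w2"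
  shows "card (fib w1) \<le> card (fib w2)"
proof -
  obtain s where s: "s \<in> S" "w2 = s \<cdot> w1" using L unfolding Leq_def Lle_def by blast
  obtain t where t: "t \<in> S" "w1 = t \<cdot> w2" using L unfolding Leq_def Lle_def by blast
  have w: "w1 \<in> S" "w2 \<in> S" using DS w1 w2 by auto
  have main: "s \<cdot> x \<in> fib w2 \<and> t \<cdot> (s \<cdot> x) = x" if x: "x \<in> fib w1" for x
  proof -
    have xD: "x \<in> D" and xR: "Req x w1" and xL: "Leq x w1" using x fib_alt[OF w1] by auto
    have xS: "x \<in> S" using DS xD by auto
    obtain u where u: "u \<in> S" "x = w1 \<cdot> u" using xR unfolding Req_def Rle_def by blast
    obtain v where v: "v \<in> S" "w1 = x \<cdot> v" using xR unfolding Req_def Rle_def by blast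
    have "t \<cdot> (s \<cdot> x) = t \<cdot> (s \<cdot> w1) \<cdot> u" using u(1) s(1) t(1) w by (simp add: u(2))
    also have "\<dots> = w1 \<cdot> u" using u(1) s(1) t(1) w by (simp add: s(2)[symmetric] t(2)[symmetric])
    finally have xst: "t \<cdot> (s \<cdot> x) = x" using u(2) by simp
    have xsS: "s \<cdot> x \<in> S" using xS s by auto
    have "s \<cdot> x \<noteq> z"
    proof
      assume "s \<cdot> x = z"
      then have "x = t \<cdot> z" using xst by simp
      then show False using Dnz[OF xD] zr[OF t(1)] by simp
    qed
    then have xsD: "s \<cdot> x \<in> D" using nzD xsS by auto
    have "Lle (s \<cdot> x) x" unfolding Lle_def using s by auto
    moreover have "Lle x (s \<cdot> x)" unfolding Lle_def using t xst by metis
    ultimately have "Leq (s \<cdot> x) x" unfolding Leq_def by auto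
    then have L2: "Leq (s \<cdot> x) w2" using Leq_trans[OF xsS xS w(1)] Leq_trans[OF xsS w(1) w(2)] xL L by blast
    have "s \<cdot> x = w2 \<cdot> u" using u(1) s(1) w by (simp add: u(2) s(2))
    then have "Rle (s \<cdot> x) w2" unfolding Rle_def using u by blast
    moreover have "w2 = (s \<cdot> x) \<cdot> v" using v(1) s(1) xS by (simp add: s(2) v(2))
    then have "Rle w2 (s \<cdot> x)" unfolding Rle_def using v by blast
    ultimately have "Req (s \<cdot> x) w2" unfolding Req_def by auto
    then show ?thesis using xst L2 xsD fib_alt[OF w2] by auto
  qed
  have "inj_on (\<lambda>x. s \<cdot> x) (fib w1)"
    by (rule inj_onI) (metis main)
  moreover have "(\<lambda>x. s \<cdot> x) ` fib w1 \<subseteq> fib w2" using main by auto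
  ultimately show ?thesis using card_inj_on_le fib_fin by blast
qed

lemma fib_card: assumes w1: "w1 \<in> D" and w2: "w2 \<in> D" shows "card (fib w1) = card (fib w2)"
proof -
  obtain w3 where w3: "w3 \<in> D" "Req w3 w1" "Leq w3 w2" using meet[OF w1 w2] by blast
  have "card (fib w1) = card (fib w3)"
    using green_R[OF w1 w3(1) Req_sym[OF w3(2)]] green_R[OF w3(1) w1 w3(2)] by simp
  also have "\<dots> = card (fib w2)"
    using green_L[OF w3(1) w2 w3(3)] green_L[OF w2 w3(1) Leq_sym[OF w3(3)]] by simp
  finally show ?thesis .
qed

end

context zs begin

lemma preimage_card:
  assumes K: "K \<subseteq> fm ` D" and w0: "w0 \<in> D"
  shows "card {x \<in> D. fm x \<in> K} = card (fib w0) * card K"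
proof -
  have finD: "finite D" using fin Sz finite_subset by auto
  have finK: "finite K" using K finD finite_subset by blast
  have eq: "{x \<in> D. fm x \<in> K} = (\<Union>b\<in>K. {x \<in> D. fm x = b})" by blast
  have "card (\<Union>b\<in>K. {x \<in> D. fm x = b}) = (\<Sum>b\<in>K. card {x \<in> D. fm x = b})"
    by (rule card_UN_disjoint) (use finK finD in auto)
  also have "\<dots> = (\<Sum>b\<in>K. card (fib w0))"
  proof (rule sum.cong)
    fix b assume "b \<in> K"
    then obtain w where w: "w \<in> D" "b = fm w" using K by blast
    then have "{x \<in> D. fm x = b} = fib w" unfolding fib_def by simp
    then show "card {x \<in> D. fm x = b} = card (fib w0)" using fib_card[OF w(1) w0] by simp
  qed simp
  finally show ?thesis using eq by simp
qed

lemma B_perm: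
  assumes p: "permutation_matching S m \<phi>"
  shows "\<exists>\<pi>. permutation_matching B mB \<pi>"
proof -
  have bp: "bij_betw \<phi> S S" and pi: "\<And>a. a \<in> S \<Longrightarrow> \<phi> a \<in> inverses S m a"
    using p unfolding permutation_matching_def by auto
  have finD: "finite D" using fin Sz finite_subset by auto
  obtain w0 where w0: "w0 \<in> D" using Dne by blast
  have s0: "card (fib w0) > 0" using fib_fin w0 unfolding fib_def by (auto simp: card_gt_0_iff)
  define A where "A b = {c \<in> fm ` D. c \<in> inverses B mB b}" for b
  have hallc: "\<forall>K\<subseteq>fm ` D. card K \<le> card (\<Union>(A ` K))"
  proof (intro allI impI)
    fix K assume K: "K \<subseteq> fm ` D"
    define N where "N = \<Union>(A ` K)"
    have N: "N \<subseteq> fm ` D" unfolding N_def A_def by auto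
    define U where "U = {x \<in> D. fm x \<in> K}"
    define W where "W = {x \<in> D. fm x \<in> N}"
    have "\<phi> ` U \<subseteq> W"
    proof
      fix y assume "y \<in> \<phi> ` U"
      then obtain x where x: "x \<in> D" "fm x \<in> K" "y = \<phi> x" unfolding U_def by blast
      have yi: "y \<in> inverses S m x" using pi DS x by auto
      have yD: "y \<in> D" using inv_nz[OF x(1) yi] by simp
      have "fm y \<in> inverses B mB (fm x)"
        using hom_inv[where h=fm and n=mB, OF sg fm_hom DS[OF x(1)] yi] .
      then have "fm y \<in> A (fm x)" unfolding A_def using yD by blast
      then show "y \<in> W" unfolding W_def N_def using yD x by blast
    qed
    moreover have "U \<subseteq> S" unfolding U_def using DS by blast
    then have "inj_on \<phi> U" using inj_on_subset[OF bij_betw_imp_inj_on[OF bp]] by blast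
    moreover have "finite W" unfolding W_def using finD by simp
    ultimately have "card U \<le> card W" using card_inj_on_le by blast
    then have "card (fib w0) * card K \<le> card (fib w0) * card N"
      using preimage_card[OF K w0] preimage_card[OF N w0] unfolding U_def W_def by simp
    then show "card K \<le> card (\<Union>(A ` K))" using s0 N_def by simp
  qed
  obtain g where g: "inj_on g (fm ` D)" "\<forall>b\<in>fm ` D. g b \<in> A b"
    using hall_marriage[of "fm ` D" A] hallc finD unfolding A_def by auto
  define \<pi> where "\<pi> b = (if b = None then None else g b)" for b
  have gN: "g b \<in> fm ` D" "g b \<noteq> None" if "b \<in> fm ` D" for b
    using g that fm_D unfolding A_def by auto
  have sub: "\<pi> ` B \<subseteq> B" unfolding B_eq \<pi>_def using gN by auto
  have pN: "\<pi> c = None \<longleftrightarrow> c = None" if c: "c \<in> B" for c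
  proof (cases "c = None")
    case True then show ?thesis unfolding \<pi>_def by simp
  next
    case False
    have "c \<in> insert None (fm ` D)" using c B_eq by simp
    then have "c \<in> fm ` D" using False by blast
    then have gc: "g c \<noteq> None" using gN(2) by blast
    have "\<pi> c = g c" unfolding \<pi>_def using False by (simp only: if_False)
    then show ?thesis using False gc by (simp (no_asm_use) only: \<open>\<pi> c = g c\<close> gc False simp_thms)
  qed
  have inj: "inj_on \<pi> B"
  proof (rule inj_onI)
    fix a b assume ab: "a \<in> B" "b \<in> B" "\<pi> a = \<pi> b"
    have ea: "a = None \<longleftrightarrow> b = None" using pN[OF ab(1)] pN[OF ab(2)] ab(3) by simp
    show "a = b"
    proof (cases "a = None")
      case True then show ?thesis using ea by simp
    next
      case False
      then have nn: "a \<noteq> None" "b \<noteq> None" using ea by auto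
      have "a \<in> fm ` D" "b \<in> fm ` D" using ab(1,2) B_eq nn by auto
      moreover have "g a = g b" using ab(3) nn unfolding \<pi>_def by simp
      ultimately show ?thesis using inj_onD[OF g(1)] by blast
    qed
  qed
  have finB: "finite B" using fin by simp
  have "bij_betw \<pi> B B" unfolding bij_betw_def using inj endo_inj_surj[OF finB sub inj] by blast
  moreover have "\<forall>b\<in>B. \<pi> b \<in> inverses B mB b"
  proof
    fix b assume b: "b \<in> B"
    show "\<pi> b \<in> inverses B mB b"
    proof (cases "b = None")
      case True
      have "None \<in> B" using B_eq by simp
      then show ?thesis using True unfolding \<pi>_def inverses_def by simp
    next
      case False
      have "b \<in> insert None (fm ` D)" using b B_eq by simp
      then have bD: "b \<in> fm ` D" using False by blast
      have "\<pi> b = g b" unfolding \<pi>_def using False by (simp only: if_False)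
      then show ?thesis using g(2) bD unfolding A_def by auto
    qed
  qed
  ultimately show ?thesis unfolding permutation_matching_def by blast
qed

lemma B_lift:
  assumes chi: "involution_matching B mB \<chi>"
  shows "\<exists>\<psi>. involution_matching S m \<psi>"
proof -
  have cb: "bij_betw \<chi> B B" and ci: "\<And>b. b \<in> B \<Longrightarrow> \<chi> b \<in> inverses B mB b"
    and cc: "\<And>b. b \<in> B \<Longrightarrow> \<chi> (\<chi> b) = b"
    using chi unfolding involution_matching_def permutation_matching_def by auto
  have ex: "\<exists>y. y \<in> inverses S m x \<and> fm y = \<chi> (fm x)" if x: "x \<in> D" for x
  proof -
    have fxB: "fm x \<in> B" using DS[OF x] by blast
    have c1: "\<chi> (fm x) \<in> inverses B mB (fm x)" using ci[OF fxB] .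
    then have "\<chi> (fm x) \<in> B" unfolding inverses_def by auto
    moreover have "\<chi> (fm x) \<noteq> None"
    proof
      assume "\<chi> (fm x) = None"
      then show False using c1 VB_None[OF x] by simp
    qed
    ultimately have "\<chi> (fm x) \<in> fm ` D" using B_eq by auto
    then obtain w where w: "w \<in> D" "\<chi> (fm x) = fm w" by blast
    then have "x \<cdot> w \<noteq> z" "w \<cdot> x \<noteq> z" using VB[OF x w(1)] c1 by auto
    then obtain y where y: "y \<in> inverses S m x" "Req y w" "Leq y w" using exist_inv[OF x w(1)] by blast
    have "y \<in> D" using inv_nz[OF x y(1)] by simp
    then have "fm y = fm w" using fm_eq[OF _ w(1)] y by simp
    then show ?thesis using y w by auto
  qed
  define \<psi> where "\<psi> x = (if x = z then z else SOME y. y \<in> inverses S m x \<and> fm y = \<chi> (fm x))" for x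
  have pr: "\<psi> x \<in> inverses S m x \<and> fm (\<psi> x) = \<chi> (fm x)" if x: "x \<in> D" for x
  proof -
    have "(SOME y. y \<in> inverses S m x \<and> fm y = \<chi> (fm x)) \<in> inverses S m x \<and> fm (SOME y. y \<in> inverses S m x \<and> fm y = \<chi> (fm x)) = \<chi> (fm x)"
      using someI_ex[OF ex[OF x]] .
    then show ?thesis unfolding \<psi>_def using Dnz[OF x] by simp
  qed
  have zz: "z \<in> inverses S m z" unfolding inverses_def by simp
  have inv: "\<psi> x \<in> inverses S m x" if x: "x \<in> S" for x
  proof (cases "x = z")
    case True
    have "\<psi> z = z" unfolding \<psi>_def by simp
    then show ?thesis using zz True by simp
  next
    case False
    then show ?thesis using pr nzD x by blast
  qed
  have inS: "\<psi> x \<in> S" if "x \<in> S" for x using inv[OF that] unfolding inverses_def by auto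
  have invol: "\<psi> (\<psi> x) = x" if x: "x \<in> S" for x
  proof (cases "x = z")
    case True then show ?thesis unfolding \<psi>_def by simp
  next
    case False
    then have xD: "x \<in> D" using nzD x by simp
    let ?y = "\<psi> x"
    have y: "?y \<in> inverses S m x" "fm ?y = \<chi> (fm x)" using pr[OF xD] by auto
    have yD: "?y \<in> D" using inv_nz[OF xD y(1)] by simp
    have xy: "x \<in> inverses S m ?y" using inv_sym[OF x y(1)] .
    have w: "\<psi> ?y \<in> inverses S m ?y" "fm (\<psi> ?y) = \<chi> (fm ?y)" using pr[OF yD] by auto
    have wD: "\<psi> ?y \<in> D" using inv_nz[OF yD w(1)] by simp
    have "fm (\<psi> ?y) = fm x" using w(2) y(2) cc DS[OF xD] by auto
    then have "Req (\<psi> ?y) x \<and> Leq (\<psi> ?y) x" using fm_eq[OF wD xD] by simp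
    then show ?thesis using inv_unique_H[OF DS[OF yD] xy w(1)] unfolding Req_def Leq_def by blast
  qed
  have "involution_matching S m \<psi>"
    unfolding involution_matching_def permutation_matching_def
    using invol_bij[of S \<psi>] inS inv invol by blast
  then show ?thesis by blast
qed

lemma nonH_contra:
  assumes pni: "perm_not_inv S m"
    and minimal: "\<forall>(T :: ('a \<times> 'a) option set) n. finite T \<and> semigroup_on T n \<and> regular_sg T n \<and> perm_not_inv T n \<longrightarrow> card S \<le> card T"
  shows "\<forall>x\<in>D. \<forall>y\<in>D. Req x y \<and> Leq x y \<longrightarrow> x = y"
proof (rule ccontr)
  assume "\<not> ?thesis"
  then obtain x y where xy: "x \<in> D" "y \<in> D" "Req x y" "Leq x y" "x \<noteq> y" by blast
  have "fm x = fm y" using fm_eq[OF xy(1,2)] xy by simp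
  then have "\<not> inj_on fm S" using xy DS unfolding inj_on_def by blast
  then have "card B \<noteq> card S" using inj_on_iff_eq_card[OF fin, of fm] by simp
  then have lt: "card B < card S" using card_image_le[OF fin, of fm] by simp
  have sgB: "semigroup_on B mB" using hom_sg[where h=fm and n=mB, OF sg fm_hom] .
  have regB: "regular_sg B mB"
    unfolding regular_sg_def
  proof
    fix b assume "b \<in> B"
    then obtain x where x: "x \<in> S" "b = fm x" by blast
    obtain y where "y \<in> inverses S m x" using reg x unfolding regular_sg_def by blast
    then show "inverses B mB b \<noteq> {}" using hom_inv[where h=fm and n=mB, OF sg fm_hom x(1)] x by blast
  qed
  obtain \<phi> where "permutation_matching S m \<phi>" using pni perm_not_inv_def by blast
  then have "\<exists>\<pi>. permutation_matching B mB \<pi>" using B_perm by blast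
  moreover have "\<not> (\<exists>\<chi>. involution_matching B mB \<chi>)" using B_lift pni perm_not_inv_def by blast
  ultimately have "perm_not_inv B mB" unfolding perm_not_inv_def by blast
  moreover have "finite B" using fin by simp
  ultimately have "card S \<le> card B" using minimal sgB regB by blast
  then show False using lt by simp
qed

end

context rsg begin

lemma pf_reg: assumes c: "c \<in> S" shows "regular_sg (pfC (Jcls c)) (pfM (Jcls c))"
  unfolding regular_sg_def
proof
  fix X assume "X \<in> pfC (Jcls c)"
  then consider "X = None" | x where "X = Some x" "x \<in> Jcls c" unfolding pfC_def by blast
  then show "inverses (pfC (Jcls c)) (pfM (Jcls c)) X \<noteq> {}"
  proof cases
    case 1 then show ?thesis using pf_inv_None by simp
  next
    case 2
    have "inverses S m x \<noteq> {}" using reg 2(2) Jcls_sub unfolding regular_sg_def by blast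
    then show ?thesis using pf_inv_Some[OF c 2(2)] 2(1) by simp
  qed
qed

lemma Jcls_all: assumes c: "c \<in> S" shows "\<forall>x\<in>Jcls c. \<forall>y\<in>Jcls c. Jle x y"
proof (intro ballI)
  fix x y assume x: "x \<in> Jcls c" and y: "y \<in> Jcls c"
  have "Jle x c" "Jle c y" "x \<in> S" "y \<in> S" using x y unfolding Jcls_def Jeq_def by auto
  then show "Jle x y" using Jle_trans c by blast
qed

end

theorem proposition2p1:
  fixes S :: "'a set" and m :: "'a \<Rightarrow> 'a \<Rightarrow> 'a"
  assumes "finite S" and "semigroup_on S m" and "regular_sg S m" and "perm_not_inv S m"
    and minimal: "\<And>(T :: nat set) (n :: nat \<Rightarrow> nat \<Rightarrow> nat).
        finite T \<Longrightarrow> semigroup_on T n \<Longrightarrow> regular_sg T n \<Longrightarrow> perm_not_inv T n \<Longrightarrow>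
        card S \<le> card T"
  shows "zero_rectangular_band S m"
proof -
  interpret rsg S m using assms(1-3) by unfold_locales
  have minimal': "\<forall>(T :: nat set) (n :: nat \<Rightarrow> nat \<Rightarrow> nat).
        finite T \<and> semigroup_on T n \<and> regular_sg T n \<and> perm_not_inv T n \<longrightarrow> card S \<le> card T"
    using minimal by blast
  note pni = assms(4)
  obtain c where c: "c \<in> S" and pniD: "perm_not_inv (pfC (Jcls c)) (pfM (Jcls c))"
    using Jclass_counterexample[OF pni] by blast
  define D where "D = Jcls c"
  have DS: "D \<subseteq> S" unfolding D_def using Jcls_sub .
  have finD: "finite D" using DS fin finite_subset by blast
  have cD: "c \<in> D" unfolding D_def using Jcls_self[OF c] .
  have "card (pfC D) = card D + 1"
    unfolding pfC_def using finD by (simp add: card_image)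
  moreover have "card S \<le> card (pfC D)"
    using min_transfer[where S=S and T="pfC D" and n="pfM D", OF minimal'] pniD pf_sg[OF c] pf_reg[OF c] finD
    unfolding D_def pfC_def by simp
  ultimately have cardS: "card S \<le> card D + 1" by simp
  have DJ: "\<forall>x\<in>D. \<forall>y\<in>D. Jle x y" unfolding D_def using Jcls_all[OF c] .
  show ?thesis
  proof (cases "D = S")
    case True
    then have "\<exists>\<psi>. involution_matching S m \<psi>" using simple_invol DJ by simp
    then show ?thesis using pni perm_not_inv_def by blast
  next
    case False
    have "card (S - D) = card S - card D" using card_Diff_subset[OF finD DS] .
    moreover have "card D < card S" using False DS fin psubset_card_mono by blast
    ultimately have "card (S - D) = 1" using cardS by simp
    then obtain z where z: "S - D = {z}" using card_1_singletonE by blast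
    have Sz: "S = insert z D" and zD: "z \<notin> D" using z DS by auto
    show ?thesis
    proof (cases "\<forall>x\<in>D. \<forall>y\<in>D. m x y \<in> D")
      case True
      have "semigroup_on D m" "regular_sg D m" "perm_not_inv D m"
        using sub_counterexample[OF pni c] Sz zD True unfolding D_def by auto
      then have "card S \<le> card D" using min_transfer[where S=S and T=D and n=m, OF minimal'] finD by blast
      then show ?thesis using \<open>card D < card S\<close> by simp
    next
      case False
      then obtain x y where xy: "x \<in> D" "y \<in> D" "m x y \<notin> D" by blast
      have zero: "\<forall>s\<in>S. m z s = z \<and> m s z = z"
        using zero_arises[OF c] Sz zD xy unfolding D_def by blast
      interpret zs S m z D
        by unfold_locales (use Sz zD zero DJ cD in auto)
      have minB: "\<forall>(T :: ('a \<times> 'a) option set) n. finite T \<and> semigroup_on T n \<and> regular_sg T n \<and> perm_not_inv T n \<longrightarrow> card S \<le> card T"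
        using min_transfer[OF minimal'] by blast
      have "\<forall>x\<in>D. \<forall>y\<in>D. Req x y \<and> Leq x y \<longrightarrow> x = y"
        using nonH_contra[OF pni minB] by blast
      then show ?thesis using H_trivial_case by blast
    qed
  qed
qed

end
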